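(* Consider the no-CoT case $k=0$, so that the evaluation loss is $$\mathcal L^{\mathrm{Eval}}(V,W)=\tfrac12\,\mathbb E_{X,\mathbf w^*}\Big[\big\|f_{\mathrm{LSA}}(Z_0;V,W)_{[:,-1]}-(0_d,0,\mathbf w^*,1)\big\|^2\Big].$$ If $(V^*,W^* )$ is a global minimizer of $\mathcal L^{\mathrm{Eval}}$, then the corresponding one-layer transformer implements one step of gradient descent from $0$ on the linear least-squares objective with learning rate $\eta^*=\frac{n}{n+d+1}$. That is, it outputs $$f_{\mathrm{LSA}}(Z_0;V^*,W^* )_{[:,-1]}=\Big(0_d,\,0,\,\tfrac{\eta^*}{n}X\mathbf y^\top,\,1\Big).$$
   Context: Let $d,n\ge 1$ and $d_e=2d+2$. Sample $\mathbf w^*\sim\mathcal N(0,I_d)$ and, independently, $\mathbf x_1,\dots,\mathbf x_n$ i.i.d. $\mathcal N(0,I_d)$. Set $y_i=\mathbf w^{*\top}\mathbf x_i$, $X=[\mathbf x_1,\dots,\mathbf x_n]\in\mathbb R^{d\times n}$ and $\mathbf y=(y_1,\dots,y_n)\in\mathbb R^{1\times n}$. For $V,W\in\mathbb R^{d_e\times d_e}$ and a matrix $Z$ with $d_e$ rows, the one-layer linear self-attention model is $f_{\mathrm{LSA}}(Z;V,W)=Z+VZ\,\frac{Z^\top WZ}{n}$. Its prediction is the last column $f_{\mathrm{LSA}}(Z;V,W)_{[:,-1]}$. The input is $$Z_0=\begin{bmatrix}X&0_d\\ \mathbf y&0\\ 0_{d\times n}&\mathbf w_0\\ 0_{1\times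 n}&1\end{bmatrix}\in\mathbb R^{d_e\times(n+1)},\qquad \mathbf w_0=0_d.$$ The goal of the model (in-context weight prediction) is to output $(0_d,0,\mathbf w^*,1)$. *)

theory Defs
  imports "HOL-Probability.Probability" "Jordan_Normal_Form.Matrix"
begin

definition std_gauss :: "real measure" where
  "std_gauss = density lborel std_normal_density"

definition data_measure :: "nat \<Rightarrow> nat \<Rightarrow> ((nat \<times> nat \<Rightarrow> real) \<times> (nat \<Rightarrow> real)) measure" where
  "data_measure d n = (PiM ({..<d} \<times> {..<n}) (\<lambda>_. std_gauss)) \<Otimes>\<^sub>M (PiM {..<d} (\<lambda>_. std_gauss))"

definition de :: "nat \<Rightarrow> nat" where
  "de d = 2 * d + 2"

definition labels :: "real mat \<Rightarrow> real vec \<Rightarrow> real vec" where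
  "labels X w = vec (dim_col X) (\<lambda>j. w \<bullet> col X j)"

definition Z_in :: "real mat \<Rightarrow> real vec \<Rightarrow> real vec \<Rightarrow> real mat" where
  "Z_in X w w0 = (let d = dim_row X; n = dim_col X; y = labels X w in
     mat (2 * d + 2) (n + 1) (\<lambda>(i, j).
       if j < n then (if i < d then X $$ (i, j) else if i = d then y $ j else 0)
       else (if d < i \<and> i \<le> 2 * d then w0 $ (i - d - 1)
             else if i = 2 * d + 1 then 1 else 0)))"

definition f_LSA :: "nat \<Rightarrow> real mat \<Rightarrow> real mat \<Rightarrow> real mat \<Rightarrow> real mat" where
  "f_LSA n Z V W = Z + (1 / real n) \<cdot>\<^sub>m (V * Z * (transpose_mat Z * W * Z))"

definition lsa_pred :: "nat \<Rightarrow> real mat \<Rightarrow> real mat \<Rightarrow> real mat \<Rightarrow> real vec" where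
  "lsa_pred n Z V W = col (f_LSA n Z V W) (dim_col Z - 1)"

definition target :: "nat \<Rightarrow> real vec \<Rightarrow> real vec" where
  "target d w = vec (2 * d + 2) (\<lambda>i. if d < i \<and> i \<le> 2 * d then w $ (i - d - 1)
                                     else if i = 2 * d + 1 then 1 else 0)"

definition sq_norm_vec :: "real vec \<Rightarrow> real" where
  "sq_norm_vec v = v \<bullet> v"

definition X_of :: "nat \<Rightarrow> nat \<Rightarrow> (nat \<times> nat \<Rightarrow> real) \<Rightarrow> real mat" where
  "X_of d n f = mat d n f"

definition w_of :: "nat \<Rightarrow> (nat \<Rightarrow> real) \<Rightarrow> real vec" where
  "w_of d g = vec d g"

text \<open>Evaluation loss (k = 0): 1/2 E ||f_LSA(Z_0;V,W)_{:,-1} - (0,0,w*,1)||^2, w_0 = 0.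
  Written as a nonnegative integral (the integrand is nonnegative).\<close>
definition loss_eval :: "nat \<Rightarrow> nat \<Rightarrow> real mat \<Rightarrow> real mat \<Rightarrow> ennreal" where
  "loss_eval d n V W =
     (\<integral>\<^sup>+ s. ennreal ((1/2) * sq_norm_vec
        (lsa_pred n (Z_in (X_of d n (fst s)) (w_of d (snd s)) (0\<^sub>v d)) V W
          - target d (w_of d (snd s)))) \<partial>data_measure d n)"

end

theory Submission
  imports Defs
begin


definition good :: "'a measure \<Rightarrow> ('a \<Rightarrow> real) \<Rightarrow> bool" where
  "good M h \<longleftrightarrow> h \<in> borel_measurable M \<and> (\<forall>k. integrable M (\<lambda>x. \<bar>h x\<bar> ^ k))"

lemma ineq_mult: "\<bar>(a::real) * b\<bar> ^ k \<le> \<bar>a\<bar> ^ (2*k) + \<bar>b\<bar> ^ (2*k)"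
proof -
  define X where "X = \<bar>a\<bar>^k"
  define Y where "Y = \<bar>b\<bar>^k"
  have X: "X \<ge> 0" "Y \<ge> 0" by (auto simp: X_def Y_def)
  have e1: "\<bar>a * b\<bar> ^ k = X * Y" by (simp add: X_def Y_def abs_mult power_mult_distrib)
  have e2: "\<bar>a\<bar> ^ (2*k) = X * X" "\<bar>b\<bar> ^ (2*k) = Y * Y"
    by (simp_all add: X_def Y_def mult_2 power_add)
  have "X * Y \<le> X * X + Y * Y"
  proof (cases "X \<le> Y")
    case True then have "X * Y \<le> Y * Y" using X by (intro mult_right_mono) auto
    then show ?thesis using X by (simp add: add_increasing)
  next
    case False then have "X * Y \<le> X * X" using X by (intro mult_left_mono) auto
    then show ?thesis using X by (simp add: add_increasing2)
  qed
  then show ?thesis unfolding e1 e2 .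
qed

lemma ineq_add: "\<bar>(a::real) + b\<bar> ^ k \<le> 2^k * (\<bar>a\<bar> ^ k + \<bar>b\<bar> ^ k)"
proof -
  define m where "m = max \<bar>a\<bar> \<bar>b\<bar>"
  have "\<bar>a + b\<bar> \<le> 2 * m" by (auto simp: m_def)
  then have "\<bar>a + b\<bar> ^ k \<le> (2 * m) ^ k" by (intro power_mono) auto
  also have "\<dots> = 2^k * m^k" by (simp add: power_mult_distrib)
  also have "m^k \<le> \<bar>a\<bar> ^ k + \<bar>b\<bar> ^ k"
    by (cases "\<bar>a\<bar> \<le> \<bar>b\<bar>") (auto simp: m_def max_def)
  finally show ?thesis by simp
qed
lemma good_integrable: assumes "good M h" shows "integrable M h"
proof -
  have m: "h \<in> borel_measurable M" and i: "integrable M (\<lambda>x. \<bar>h x\<bar>^1)"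
    using assms unfolding good_def by blast+
  from i have "integrable M (\<lambda>x. \<bar>h x\<bar>)" by simp
  then show ?thesis using integrable_abs_iff[OF m] by simp
qed

lemma good_measurable: "good M h \<Longrightarrow> h \<in> borel_measurable M"
  unfolding good_def by simp

lemma good_const: "finite_measure M \<Longrightarrow> good M (\<lambda>_. c)"
  unfolding good_def using finite_measure.integrable_const[of M "\<bar>c\<bar>^k" for k] by simp

lemma good_mult: assumes "good M h" "good M g" shows "good M (\<lambda>x. h x * g x)"
  unfolding good_def
proof (intro conjI allI)
  show m: "(\<lambda>x. h x * g x) \<in> borel_measurable M" using assms by (auto simp: good_def)
  fix k
  have "integrable M (\<lambda>x. \<bar>h x\<bar> ^ (2*k) + \<bar>g x\<bar> ^ (2*k))"
    using assms by (auto simp: good_def)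
  then show "integrable M (\<lambda>x. \<bar>h x * g x\<bar> ^ k)"
    by (rule Bochner_Integration.integrable_bound) (use m ineq_mult[of "h x" "g x" k for x] in auto)
qed

lemma good_add: assumes "good M h" "good M g" shows "good M (\<lambda>x. h x + g x)"
  unfolding good_def
proof (intro conjI allI)
  show m: "(\<lambda>x. h x + g x) \<in> borel_measurable M" using assms by (auto simp: good_def)
  fix k
  have "integrable M (\<lambda>x. 2^k * (\<bar>h x\<bar> ^ k + \<bar>g x\<bar> ^ k))"
    using assms by (auto simp: good_def)
  then show "integrable M (\<lambda>x. \<bar>h x + g x\<bar> ^ k)"
    by (rule Bochner_Integration.integrable_bound) (use m ineq_add[of "h x" "g x" k for x] in auto)
qed
lemma good_uminus: assumes "good M h" shows "good M (\<lambda>x. - h x)"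
  using assms unfolding good_def by simp

lemma good_diff: assumes "good M h" "good M g" shows "good M (\<lambda>x. h x - g x)"
  using good_add[OF assms(1) good_uminus[OF assms(2)]] by simp

lemma good_sum: assumes "\<And>i. i \<in> A \<Longrightarrow> good M (h i)" "finite_measure M"
  shows "good M (\<lambda>x. \<Sum>i\<in>A. h i x)"
  using assms(1)
proof (induct A rule: infinite_finite_induct)
  case (infinite A) then show ?case using good_const[OF assms(2), of 0] by simp
next
  case empty then show ?case using good_const[OF assms(2), of 0] by simp
next
  case (insert a A)
  have "good M (h a)" "good M (\<lambda>x. \<Sum>i\<in>A. h i x)" using insert by auto
  then show ?case using insert(1,2) good_add[of M "h a"] by simp
qed

lemma good_power: assumes "good M h" "finite_measure M" shows "good M (\<lambda>x. h x ^ k)"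
proof (induct k)
  case 0 then show ?case using good_const[OF assms(2), of 1] by simp
next
  case (Suc k) then show ?case using good_mult[OF assms(1) Suc] by simp
qed

lemma good_cmult: assumes "good M h" "finite_measure M" shows "good M (\<lambda>x. c * h x)"
  using good_mult[OF good_const[OF assms(2)] assms(1)] .

lemma std_gauss_prob: "prob_space std_gauss"
  unfolding std_gauss_def by (rule prob_space_normal_density) simp

lemma std_gauss_hbi: fixes f :: "real \<Rightarrow> real"
  assumes "has_bochner_integral lborel (\<lambda>x. std_normal_density x * f x) v"
   "f \<in> borel_measurable lborel" shows "has_bochner_integral std_gauss f v"
  unfolding std_gauss_def
  by (rule has_bochner_integral_density) (use assms normal_density_nonneg in simp_all)

lemma gauss_even: "has_bochner_integral std_gauss (\<lambda>x. x ^ (2*k)) (fact (2 * k) / (2^k * fact k))"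
  by (rule std_gauss_hbi[OF std_normal_moment_even[of k]]) simp

lemma gauss_odd: "has_bochner_integral std_gauss (\<lambda>x. x ^ (2*k+1)) 0"
  by (rule std_gauss_hbi[OF std_normal_moment_odd[of k]]) simp

lemma gauss_abs_odd: "integrable std_gauss (\<lambda>x. \<bar>x\<bar> ^ (2*k+1))"
  using std_gauss_hbi[OF std_normal_moment_abs_odd[of k]] unfolding has_bochner_integral_iff by simp

lemma gauss_int_pow: "integrable std_gauss (\<lambda>x. x ^ k)"
proof (cases "even k")
  case True then obtain m where "k = 2*m" by (rule evenE)
  then show ?thesis using gauss_even[of m] unfolding has_bochner_integral_iff by simp
next
  case False then obtain m where "k = 2*m+1" by (rule oddE)
  then show ?thesis using gauss_odd[of m] unfolding has_bochner_integral_iff by simp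
qed

lemma gauss_int_abs_pow: "integrable std_gauss (\<lambda>x. \<bar>x\<bar> ^ k)"
proof (cases "even k")
  case True
  have "(\<lambda>x. \<bar>x::real\<bar> ^ k) = (\<lambda>x. x ^ k)" using True by (simp add: power_even_abs)
  then show ?thesis using gauss_int_pow[of k] by simp
next
  case False then obtain m where "k = 2*m+1" by (rule oddE)
  then show ?thesis using gauss_abs_odd[of m] by simp
qed

definition mu :: "nat \<Rightarrow> real" where "mu k = integral\<^sup>L std_gauss (\<lambda>x. x ^ k)"

lemma mu_0: "mu 0 = 1"
  using prob_space.prob_space[OF std_gauss_prob] unfolding mu_def by (simp add: measure_def)

lemma mu_odd: "mu (2*k+1) = 0"
  using gauss_odd[of k] unfolding mu_def has_bochner_integral_iff by simp

lemma mu_1: "mu 1 = 0" using mu_odd[of 0] by simp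
lemma mu_3: "mu 3 = 0" using mu_odd[of 1] by simp
lemma mu_2: "mu 2 = 1" using gauss_even[of 1] unfolding mu_def has_bochner_integral_iff by simp
lemma mu_4: "mu 4 = 3"
proof -
  have "mu (2*2) = fact 4 / (2^2 * fact 2)" using gauss_even[of 2] unfolding mu_def has_bochner_integral_iff by simp
  also have "(fact 4 :: real) = 24" by (simp add: fact_numeral)
  also have "(fact 2 :: real) = 2" by (simp add: fact_numeral)
  finally show ?thesis by simp
qed

lemma psf_gauss: "product_sigma_finite (\<lambda>_. std_gauss)"
  unfolding product_sigma_finite_def
  using prob_space_imp_sigma_finite[OF std_gauss_prob] by simp

lemma prob_PG: "prob_space (PiM K (\<lambda>_. std_gauss))"
  by (rule prob_space_PiM) (rule std_gauss_prob)

lemma fm_PG: "finite_measure (PiM K (\<lambda>_. std_gauss))"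
  using prob_PG[of K] by (rule prob_space.finite_measure)

lemma int_if: "integrable std_gauss (\<lambda>a. if j = i then \<bar>a\<bar> ^ k else 1)"
proof (cases "j = i")
  case True then show ?thesis using gauss_int_abs_pow[of k] by simp
next
  case False then show ?thesis
    using finite_measure.integrable_const[OF prob_space.finite_measure[OF std_gauss_prob], of 1] by simp
qed

lemma good_coord: assumes K: "finite K" and i: "i \<in> K"
  shows "good (PiM K (\<lambda>_. std_gauss)) (\<lambda>x. x i)"
  unfolding good_def
proof (intro conjI allI)
  show "(\<lambda>x. x i) \<in> borel_measurable (PiM K (\<lambda>_. std_gauss))"
    using i unfolding std_gauss_def by measurable
  fix k
  have int: "integrable (PiM K (\<lambda>_. std_gauss)) (\<lambda>x. \<Prod>j\<in>K. (\<lambda>t. if j = i then \<bar>t\<bar>^k else 1) (x j))"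
    by (rule product_sigma_finite.product_integrable_prod[OF psf_gauss K])
       (simp add: int_if)
  have eq: "(\<lambda>x. \<Prod>j\<in>K. (\<lambda>t. if j = i then \<bar>t\<bar>^k else 1) (x j)) = (\<lambda>x. \<bar>x i\<bar>^k)"
    by (rule ext) (use K i in \<open>simp add: prod.delta\<close>)
  show "integrable (PiM K (\<lambda>_. std_gauss)) (\<lambda>x. \<bar>x i\<bar> ^ k)" using int unfolding eq .
qed

lemma prod_list_count: assumes "finite K" "set ps \<subseteq> K"
  shows "prod_list (map x ps) = (\<Prod>i\<in>K. (x i :: real) ^ count_list ps i)"
  using assms(2)
proof (induct ps)
  case Nil then show ?case by simp
next
  case (Cons p ps)
  then have p: "p \<in> K" and IH: "prod_list (map x ps) = (\<Prod>i\<in>K. x i ^ count_list ps i)" by auto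
  have "(\<Prod>i\<in>K. x i ^ count_list (p # ps) i) = (\<Prod>i\<in>K. x i ^ count_list ps i * (if p = i then x i else 1))"
    by (rule prod.cong) auto
  also have "\<dots> = (\<Prod>i\<in>K. x i ^ count_list ps i) * (\<Prod>i\<in>K. (if p = i then x i else 1))"
    by (rule prod.distrib)
  also have "(\<Prod>i\<in>K. (if p = i then x i else 1)) = x p" using p assms(1) by (simp add: prod.delta)
  finally show ?case using IH by simp
qed

lemma moment: assumes K: "finite K" "set ps \<subseteq> K"
  shows "integral\<^sup>L (PiM K (\<lambda>_. std_gauss)) (\<lambda>x. prod_list (map x ps)) = (\<Prod>i\<in>set ps. mu (count_list ps i))"
proof -
  have "integral\<^sup>L (PiM K (\<lambda>_. std_gauss)) (\<lambda>x. prod_list (map x ps))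
      = integral\<^sup>L (PiM K (\<lambda>_. std_gauss)) (\<lambda>x. \<Prod>i\<in>K. (\<lambda>t. t ^ count_list ps i) (x i))"
    using prod_list_count[OF K] by simp
  also have "\<dots> = (\<Prod>i\<in>K. integral\<^sup>L std_gauss (\<lambda>t. t ^ count_list ps i))"
    by (rule product_sigma_finite.product_integral_prod[OF psf_gauss K(1)]) (rule gauss_int_pow)
  also have "\<dots> = (\<Prod>i\<in>K. mu (count_list ps i))" by (simp add: mu_def)
  also have "\<dots> = (\<Prod>i\<in>set ps. mu (count_list ps i))"
    by (rule prod.mono_neutral_right) (use K in \<open>auto simp: mu_0 count_list_0_iff\<close>)
  finally show ?thesis .
qed

lemma mu_S: "mu (Suc 0) = 0" "mu (Suc (Suc 0)) = 1" "mu (Suc (Suc (Suc 0))) = 0" "mu (Suc (Suc (Suc (Suc 0)))) = 3"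
  using mu_1 mu_2 mu_3 mu_4 by (simp_all add: numeral_eq_Suc)

lemma mom1: "finite K \<Longrightarrow> a \<in> K \<Longrightarrow> integral\<^sup>L (PiM K (\<lambda>_. std_gauss)) (\<lambda>x. x a) = 0"
  using moment[of K "[a]"] by (simp add: mu_S)

lemma mom2: "finite K \<Longrightarrow> a \<in> K \<Longrightarrow> b \<in> K \<Longrightarrow>
  integral\<^sup>L (PiM K (\<lambda>_. std_gauss)) (\<lambda>x. x a * x b) = (if a = b then 1 else 0)"
  using moment[of K "[a,b]"] by (cases "a = b") (simp_all add: mu_S)

lemma mom3: "finite K \<Longrightarrow> a \<in> K \<Longrightarrow> b \<in> K \<Longrightarrow> c \<in> K \<Longrightarrow>
  integral\<^sup>L (PiM K (\<lambda>_. std_gauss)) (\<lambda>x. x a * x b * x c) = 0"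
  using moment[of K "[a,b,c]"]
  by (cases "a = b"; cases "a = c"; cases "b = c") (simp_all add: mu_S mult.assoc insert_absorb insert_commute)

lemma mom4: "finite K \<Longrightarrow> a \<in> K \<Longrightarrow> b \<in> K \<Longrightarrow> c \<in> K \<Longrightarrow> e \<in> K \<Longrightarrow>
  integral\<^sup>L (PiM K (\<lambda>_. std_gauss)) (\<lambda>x. x a * x b * x c * x e) =
    (if a = b \<and> c = e then 1 else 0) + (if a = c \<and> b = e then 1 else 0) + (if a = e \<and> b = c then 1 else 0)"
  using moment[of K "[a,b,c,e]"]
  by (cases "a = b"; cases "a = c"; cases "a = e"; cases "b = c"; cases "b = e"; cases "c = e")
     (simp_all add: mu_S mult.assoc insert_absorb insert_commute)

lemma pair_factor:
  fixes F :: "'a \<Rightarrow> real" and G :: "'b \<Rightarrow> real"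
  assumes P1: "prob_space M1" and P2: "prob_space M2" and F: "integrable M1 F" and G: "integrable M2 G"
  shows pair_factor_int: "integrable (M1 \<Otimes>\<^sub>M M2) (\<lambda>s. F (fst s) * G (snd s))"
   and pair_factor_eq: "integral\<^sup>L (M1 \<Otimes>\<^sub>M M2) (\<lambda>s. F (fst s) * G (snd s)) = integral\<^sup>L M1 F * integral\<^sup>L M2 G"
proof -
  interpret S1: sigma_finite_measure M1 using P1 by (rule prob_space_imp_sigma_finite)
  interpret S2: sigma_finite_measure M2 using P2 by (rule prob_space_imp_sigma_finite)
  interpret pair_sigma_finite M1 M2 ..
  have mF[measurable]: "F \<in> borel_measurable M1" using F by simp
  have mG[measurable]: "G \<in> borel_measurable M2" using G by simp
  have meas[measurable]: "(\<lambda>s. F (fst s) * G (snd s)) \<in> borel_measurable (M1 \<Otimes>\<^sub>M M2)" by measurable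
  have "(\<integral>\<^sup>+s. ennreal (norm (F (fst s) * G (snd s))) \<partial>(M1 \<Otimes>\<^sub>M M2))
      = (\<integral>\<^sup>+x. \<integral>\<^sup>+y. ennreal (norm (F (fst (x,y)) * G (snd (x,y)))) \<partial>M2 \<partial>M1)"
    by (rule S2.nn_integral_fst[symmetric]) measurable
  also have "\<dots> = (\<integral>\<^sup>+x. ennreal \<bar>F x\<bar> * (\<integral>\<^sup>+y. ennreal \<bar>G y\<bar> \<partial>M2) \<partial>M1)"
    by (simp add: abs_mult ennreal_mult nn_integral_cmult)
  also have "\<dots> = (\<integral>\<^sup>+x. ennreal \<bar>F x\<bar> \<partial>M1) * (\<integral>\<^sup>+y. ennreal \<bar>G y\<bar> \<partial>M2)"
    by (simp add: nn_integral_multc)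
  also have "\<dots> < \<infinity>"
    using F G by (simp add: integrable_iff_bounded ennreal_mult_less_top)
  finally show int: "integrable (M1 \<Otimes>\<^sub>M M2) (\<lambda>s. F (fst s) * G (snd s))"
    by (intro integrableI_bounded meas)
  have "integral\<^sup>L (M1 \<Otimes>\<^sub>M M2) (\<lambda>s. F (fst s) * G (snd s)) = (\<integral>x. (\<integral>y. F x * G y \<partial>M2) \<partial>M1)"
    using integral_fst'[OF int] by simp
  also have "\<dots> = (\<integral>x. F x * integral\<^sup>L M2 G \<partial>M1)" by simp
  also have "\<dots> = integral\<^sup>L M1 F * integral\<^sup>L M2 G" by simp
  finally show "integral\<^sup>L (M1 \<Otimes>\<^sub>M M2) (\<lambda>s. F (fst s) * G (snd s)) = integral\<^sup>L M1 F * integral\<^sup>L M2 G" .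
qed

lemma good_fst:
  assumes P1: "prob_space M1" and P2: "prob_space M2" and F: "good M1 F"
  shows "good (M1 \<Otimes>\<^sub>M M2) (\<lambda>s. F (fst s))"
  unfolding good_def
proof (intro conjI allI)
  show "(\<lambda>s. F (fst s)) \<in> borel_measurable (M1 \<Otimes>\<^sub>M M2)" using good_measurable[OF F] by measurable
  fix k
  have "integrable M1 (\<lambda>x. \<bar>F x\<bar>^k)" using F by (simp add: good_def)
  moreover have "integrable M2 (\<lambda>y. 1::real)"
    using finite_measure.integrable_const[OF prob_space.finite_measure[OF P2], of "1::real"] .
  ultimately have "integrable (M1 \<Otimes>\<^sub>M M2) (\<lambda>s. \<bar>F (fst s)\<bar>^k * 1)"
    by (rule pair_factor_int[OF P1 P2])
  then show "integrable (M1 \<Otimes>\<^sub>M M2) (\<lambda>s. \<bar>F (fst s)\<bar>^k)" by simp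
qed

lemma good_snd:
  assumes P1: "prob_space M1" and P2: "prob_space M2" and G: "good M2 G"
  shows "good (M1 \<Otimes>\<^sub>M M2) (\<lambda>s. G (snd s))"
  unfolding good_def
proof (intro conjI allI)
  show "(\<lambda>s. G (snd s)) \<in> borel_measurable (M1 \<Otimes>\<^sub>M M2)" using good_measurable[OF G] by measurable
  fix k
  have "integrable M2 (\<lambda>x. \<bar>G x\<bar>^k)" using G by (simp add: good_def)
  moreover have "integrable M1 (\<lambda>y. 1::real)"
    using finite_measure.integrable_const[OF prob_space.finite_measure[OF P1], of "1::real"] .
  ultimately have "integrable (M1 \<Otimes>\<^sub>M M2) (\<lambda>s. 1 * \<bar>G (snd s)\<bar>^k)"
    by (intro pair_factor_int[OF P1 P2])
  then show "integrable (M1 \<Otimes>\<^sub>M M2) (\<lambda>s. \<bar>G (snd s)\<bar>^k)" by simp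
qed

lemma sum_split4:
  fixes a :: "nat \<Rightarrow> real"
  shows "(\<Sum>k<2*d+2. a k) = (\<Sum>k<d. a k) + a d + (\<Sum>k\<in>{d<..2*d}. a k) + a (2*d+1)"
proof -
  have "{..<2*d+2} = {..<d} \<union> {d} \<union> {d<..2*d} \<union> {2*d+1}" by auto
  moreover have "sum a ({..<d} \<union> {d<..2 * d}) = sum a {..<d} + sum a {d<..2 * d}"
    by (rule sum.union_disjoint) auto
  ultimately show ?thesis by simp
qed

lemma Z_carrier: "X \<in> carrier_mat d n \<Longrightarrow> Z_in X w w0 \<in> carrier_mat (2*d+2) (n+1)"
  by (simp add: Z_in_def Let_def)

lemma Z_entry: "X \<in> carrier_mat d n \<Longrightarrow> i < 2*d+2 \<Longrightarrow> j < n+1 \<Longrightarrow>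
  Z_in X w w0 $$ (i,j) = (if j < n then (if i < d then X $$ (i, j) else if i = d then labels X w $ j else 0)
       else (if d < i \<and> i \<le> 2 * d then w0 $ (i - d - 1)
             else if i = 2 * d + 1 then 1 else 0))"
  by (simp add: Z_in_def Let_def)

definition yy :: "real mat \<Rightarrow> real vec \<Rightarrow> nat \<Rightarrow> real" where
  "yy X w j = (\<Sum>i<dim_row X. w $ i * X $$ (i,j))"

definition qq :: "real mat \<Rightarrow> real vec \<Rightarrow> real mat \<Rightarrow> nat \<Rightarrow> real" where
  "qq X w W j = (\<Sum>i<dim_row X. X $$ (i,j) * W $$ (i, 2*dim_row X+1)) + yy X w j * W $$ (dim_row X, 2*dim_row X+1)"

definition GG :: "real mat \<Rightarrow> real vec \<Rightarrow> real mat \<Rightarrow> real mat \<Rightarrow> nat \<Rightarrow> real" where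
  "GG X w V W r = (let d = dim_row X; n = dim_col X in
     (\<Sum>k<d. V $$ (r,k) * (\<Sum>j<n. X $$ (k,j) * qq X w W j))
     + V $$ (r,d) * (\<Sum>j<n. yy X w j * qq X w W j)
     + V $$ (r,2*d+1) * W $$ (2*d+1, 2*d+1))"

lemma labels_eq: "X \<in> carrier_mat d n \<Longrightarrow> w \<in> carrier_vec d \<Longrightarrow> j < n \<Longrightarrow> labels X w $ j = yy X w j"
  unfolding labels_def yy_def scalar_prod_def
  by (auto intro!: sum.cong simp: atLeast0LessThan)

lemma pred_formula:
  assumes X: "X \<in> carrier_mat d n" and w: "w \<in> carrier_vec d"
    and V: "V \<in> carrier_mat (2*d+2) (2*d+2)" and W: "W \<in> carrier_mat (2*d+2) (2*d+2)"
  shows "lsa_pred n (Z_in X w (0\<^sub>v d)) V W =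
    vec (2*d+2) (\<lambda>r. (if r = 2*d+1 then 1 else 0) + (1 / real n) * GG X w V W r)"
proof -
  define Z where "Z = Z_in X w (0\<^sub>v d)"
  have Zc: "Z \<in> carrier_mat (2*d+2) (n+1)" unfolding Z_def using X by (rule Z_carrier)
  have Ze: "\<And>i j. i < 2*d+2 \<Longrightarrow> j < n+1 \<Longrightarrow> Z $$ (i,j) = (if j < n then (if i < d then X $$ (i, j) else if i = d then yy X w j else 0)
       else (if i = 2 * d + 1 then 1 else 0))"
    unfolding Z_def using X w by (auto simp: Z_entry labels_eq)
  define u where "u = vec (2*d+2) (\<lambda>k. W $$ (k, 2*d+1))"
  define q where "q = vec (n+1) (\<lambda>j. if j < n then qq X w W j else W $$ (2*d+1, 2*d+1))"
  define h where "h = vec (2*d+2) (\<lambda>k. if k < d then (\<Sum>j<n. X $$ (k,j) * qq X w W j)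
     else if k = d then (\<Sum>j<n. yy X w j * qq X w W j) else if k = 2*d+1 then W $$ (2*d+1, 2*d+1) else 0)"
  have c0: "col Z n = vec (2*d+2) (\<lambda>i. if i = 2*d+1 then 1 else 0)"
    using Zc Ze by (auto intro!: eq_vecI)
  have s1: "W *\<^sub>v col Z n = u"
  proof (rule eq_vecI)
    fix i assume "i < dim_vec u"
    then have i: "i < 2*d+2" by (simp add: u_def)
    have "(W *\<^sub>v col Z n) $ i = (\<Sum>k<2*d+2. W $$ (i,k) * (if k = 2*d+1 then 1 else 0))"
      using W i unfolding c0 by (simp add: scalar_prod_def row_def atLeast0LessThan)
    also have "\<dots> = W $$ (i, 2*d+1)" by (simp add: sum.delta'[unfolded if_distrib] if_distrib cong: if_cong)
    finally show "(W *\<^sub>v col Z n) $ i = u $ i" using i by (simp add: u_def)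
  qed (use W u_def in simp)
  have s2: "transpose_mat Z *\<^sub>v u = q"
  proof (rule eq_vecI)
    fix j assume "j < dim_vec q"
    then have j: "j < n+1" by (simp add: q_def)
    have "(transpose_mat Z *\<^sub>v u) $ j = (\<Sum>k<2*d+2. Z $$ (k,j) * u $ k)"
      using Zc j by (simp add: scalar_prod_def row_def u_def atLeast0LessThan)
    also have "\<dots> = q $ j"
    proof (cases "j < n")
      case True
      have A: "(\<Sum>k<d. Z $$ (k,j) * u $ k) = (\<Sum>k<d. X $$ (k,j) * W $$ (k,2*d+1))"
        by (rule sum.cong) (use True in \<open>auto simp: Ze u_def\<close>)
      have B: "(\<Sum>k\<in>{d<..2*d}. Z $$ (k,j) * u $ k) = 0"
        by (rule sum.neutral) (use True in \<open>auto simp: Ze u_def\<close>)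
      show ?thesis unfolding sum_split4 A B using True X
        by (simp add: Ze u_def q_def qq_def)
    next
      case False
      then have "j = n" using j by simp
      have A: "(\<Sum>k<d. Z $$ (k,j) * u $ k) = 0"
        by (rule sum.neutral) (use \<open>j = n\<close> in \<open>auto simp: Ze u_def\<close>)
      have B: "(\<Sum>k\<in>{d<..2*d}. Z $$ (k,j) * u $ k) = 0"
        by (rule sum.neutral) (use \<open>j = n\<close> in \<open>auto simp: Ze u_def\<close>)
      show ?thesis unfolding sum_split4 A B using \<open>j = n\<close> by (simp add: Ze u_def q_def)
    qed
    finally show "(transpose_mat Z *\<^sub>v u) $ j = q $ j" .
  qed (use Zc q_def in simp)
  have s3: "Z *\<^sub>v q = h"
  proof (rule eq_vecI)
    fix k assume "k < dim_vec h"
    then have k: "k < 2*d+2" by (simp add: h_def)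
    have "(Z *\<^sub>v q) $ k = (\<Sum>j<n+1. Z $$ (k,j) * q $ j)"
      using Zc k by (simp add: scalar_prod_def row_def q_def atLeast0LessThan)
    also have "\<dots> = (\<Sum>j<n. Z $$ (k,j) * q $ j) + Z $$ (k,n) * q $ n" by simp
    also have "(\<Sum>j<n. Z $$ (k,j) * q $ j) = (\<Sum>j<n. (if k < d then X $$ (k, j) else if k = d then yy X w j else 0) * qq X w W j)"
      by (rule sum.cong) (use k in \<open>auto simp: Ze q_def\<close>)
    finally show "(Z *\<^sub>v q) $ k = h $ k" using k by (simp add: Ze h_def q_def)
  qed (use Zc h_def in simp)
  have s4: "V *\<^sub>v h = vec (2*d+2) (\<lambda>r. GG X w V W r)"
  proof (rule eq_vecI)
    fix r assume "r < dim_vec (vec (2*d+2) (\<lambda>r. GG X w V W r))"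
    then have r: "r < 2*d+2" by simp
    have "(V *\<^sub>v h) $ r = (\<Sum>k<2*d+2. V $$ (r,k) * h $ k)"
      using V r by (simp add: scalar_prod_def row_def h_def atLeast0LessThan)
    also have "\<dots> = GG X w V W r"
    proof -
      have A: "(\<Sum>k<d. V $$ (r,k) * h $ k) = (\<Sum>k<d. V $$ (r,k) * (\<Sum>j<n. X $$ (k,j) * qq X w W j))"
        by (rule sum.cong) (auto simp: h_def)
      have B: "(\<Sum>k\<in>{d<..2*d}. V $$ (r,k) * h $ k) = 0"
        by (rule sum.neutral) (auto simp: h_def)
      show ?thesis unfolding sum_split4 A B using X by (simp add: h_def GG_def Let_def)
    qed
    finally show "(V *\<^sub>v h) $ r = vec (2*d+2) (\<lambda>r. GG X w V W r) $ r" using r by simp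
  qed (use V in simp)
  have dZ: "dim_col Z - 1 = n" using Zc by simp
  have TW: "transpose_mat Z * W \<in> carrier_mat (n+1) (2*d+2)" using Zc W by simp
  have VZ: "V * Z \<in> carrier_mat (2*d+2) (n+1)" using Zc V by simp
  have M: "transpose_mat Z * W * Z \<in> carrier_mat (n+1) (n+1)" using Zc W by simp
  have "col (V * Z * (transpose_mat Z * W * Z)) n = vec (2*d+2) (\<lambda>r. GG X w V W r)"
  proof -
    have "col (V * Z * (transpose_mat Z * W * Z)) n = (V * Z) *\<^sub>v col (transpose_mat Z * W * Z) n"
      using VZ M by (intro col_mult2) auto
    also have "col (transpose_mat Z * W * Z) n = (transpose_mat Z * W) *\<^sub>v col Z n"
      using TW Zc by (intro col_mult2) auto
    also have "\<dots> = transpose_mat Z *\<^sub>v (W *\<^sub>v col Z n)"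
      using Zc W by (intro assoc_mult_mat_vec) (auto simp: c0)
    also have "(V * Z) *\<^sub>v (transpose_mat Z *\<^sub>v (W *\<^sub>v col Z n)) = V *\<^sub>v (Z *\<^sub>v (transpose_mat Z *\<^sub>v (W *\<^sub>v col Z n)))"
      using Zc V W by (intro assoc_mult_mat_vec) (auto simp: c0)
    finally show ?thesis unfolding s1 s2 s3 s4 .
  qed
  then show ?thesis
    unfolding lsa_pred_def f_LSA_def Z_def[symmetric] dZ
    using Zc VZ M c0
    by (subst col_add) (auto simp: col_smult intro!: eq_vecI)
qed

definition yc :: "nat \<Rightarrow> (nat \<times> nat \<Rightarrow> real) \<Rightarrow> (nat \<Rightarrow> real) \<Rightarrow> nat \<Rightarrow> real" where
  "yc d f g j = (\<Sum>i<d. g i * f (i,j))"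
definition Bc :: "nat \<Rightarrow> (nat \<times> nat \<Rightarrow> real) \<Rightarrow> nat \<Rightarrow> nat \<Rightarrow> real" where
  "Bc n f a b = (\<Sum>j<n. f (a,j) * f (b,j))"
definition Pc :: "nat \<Rightarrow> nat \<Rightarrow> (nat \<times> nat \<Rightarrow> real) \<Rightarrow> (nat \<Rightarrow> real) \<Rightarrow> nat \<Rightarrow> real" where
  "Pc d n f g k = (\<Sum>j<n. f (k,j) * yc d f g j)"
definition Qc :: "nat \<Rightarrow> nat \<Rightarrow> (nat \<times> nat \<Rightarrow> real) \<Rightarrow> (nat \<Rightarrow> real) \<Rightarrow> real" where
  "Qc d n f g = (\<Sum>j<n. (yc d f g j)^2)"
definition Ac :: "nat \<Rightarrow> nat \<Rightarrow> (nat \<Rightarrow> real) \<Rightarrow> (nat \<times> nat \<Rightarrow> real) \<Rightarrow> nat \<Rightarrow> real" where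
  "Ac d n u f k = (\<Sum>j<n. f (k,j) * (\<Sum>i<d. f (i,j) * u i))"
definition qc :: "nat \<Rightarrow> real mat \<Rightarrow> (nat \<times> nat \<Rightarrow> real) \<Rightarrow> (nat \<Rightarrow> real) \<Rightarrow> nat \<Rightarrow> real" where
  "qc d W f g j = (\<Sum>i<d. f (i,j) * W $$ (i, 2*d+1)) + yc d f g j * W $$ (d, 2*d+1)"
definition GGc :: "nat \<Rightarrow> nat \<Rightarrow> real mat \<Rightarrow> real mat \<Rightarrow> (nat \<times> nat \<Rightarrow> real) \<Rightarrow> (nat \<Rightarrow> real) \<Rightarrow> nat \<Rightarrow> real" where
  "GGc d n V W f g r = (\<Sum>k<d. V $$ (r,k) * (\<Sum>j<n. f (k,j) * qc d W f g j))
     + V $$ (r,d) * (\<Sum>j<n. yc d f g j * qc d W f g j)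
     + V $$ (r,2*d+1) * W $$ (2*d+1, 2*d+1)"

lemma GG_coord: "GG (X_of d n f) (w_of d g) V W r = GGc d n V W f g r"
proof -
  have y: "\<And>j. j < n \<Longrightarrow> yy (X_of d n f) (w_of d g) j = yc d f g j"
    unfolding yy_def yc_def X_of_def w_of_def by (auto intro!: sum.cong)
  have q: "\<And>j. j < n \<Longrightarrow> qq (X_of d n f) (w_of d g) W j = qc d W f g j"
    unfolding qq_def qc_def using y by (auto simp: X_of_def intro!: sum.cong)
  show ?thesis unfolding GG_def GGc_def Let_def using y q
    by (auto simp: X_of_def intro!: sum.cong arg_cong2[where f="(+)"] arg_cong2[where f="(*)"])
qed

lemma Pc_B: "Pc d n f g k = (\<Sum>p<d. Bc n f k p * g p)"
  unfolding Pc_def Bc_def yc_def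
  by (simp add: sum_distrib_left sum_distrib_right mult_ac sum.swap[of _ "{..<n}"])

lemma Qc_B: "Qc d n f g = (\<Sum>a<d. \<Sum>b<d. Bc n f a b * (g a * g b))"
  unfolding Qc_def Bc_def yc_def power2_eq_square
  by (simp add: sum_product sum_distrib_left sum_distrib_right mult_ac sum.swap[of _ "{..<n}"])

lemma Ac_B: "Ac d n u f k = (\<Sum>i<d. u i * Bc n f k i)"
  unfolding Ac_def Bc_def
  by (simp add: sum_distrib_left sum_distrib_right mult_ac sum.swap[of _ "{..<n}"])

lemma GGc_decomp: "GGc d n V W f g r =
   (\<Sum>k<d. V $$ (r,k) * (Ac d n (\<lambda>i. W $$ (i, 2*d+1)) f k + W $$ (d, 2*d+1) * Pc d n f g k))
   + V $$ (r,d) * ((\<Sum>i<d. W $$ (i, 2*d+1) * Pc d n f g i) + W $$ (d, 2*d+1) * Qc d n f g)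
   + V $$ (r,2*d+1) * W $$ (2*d+1, 2*d+1)"
proof -
  have a: "\<And>k. (\<Sum>j<n. f (k,j) * qc d W f g j) = Ac d n (\<lambda>i. W $$ (i, 2*d+1)) f k + W $$ (d, 2*d+1) * Pc d n f g k"
    unfolding qc_def Ac_def Pc_def by (simp add: distrib_left sum.distrib sum_distrib_left mult_ac)
  have b: "(\<Sum>j<n. yc d f g j * qc d W f g j) = (\<Sum>i<d. W $$ (i, 2*d+1) * Pc d n f g i) + W $$ (d, 2*d+1) * Qc d n f g"
    unfolding qc_def Qc_def Pc_def
    by (simp add: distrib_left sum.distrib sum_distrib_left mult_ac power2_eq_square sum.swap[of _ "{..<n}"])
  show ?thesis unfolding GGc_def a b ..
qed

abbreviation MX :: "nat \<Rightarrow> nat \<Rightarrow> (nat \<times> nat \<Rightarrow> real) measure" where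
  "MX d n \<equiv> PiM ({..<d} \<times> {..<n}) (\<lambda>_. std_gauss)"
abbreviation MW :: "nat \<Rightarrow> (nat \<Rightarrow> real) measure" where
  "MW d \<equiv> PiM {..<d} (\<lambda>_. std_gauss)"

lemma DM_eq: "data_measure d n = MX d n \<Otimes>\<^sub>M MW d" by (simp add: data_measure_def)

lemma prob_DM: "prob_space (data_measure d n)"
  unfolding DM_eq by (intro prob_space_pair prob_PG)

lemma fm_DM: "finite_measure (data_measure d n)"
  using prob_DM by (rule prob_space.finite_measure)

lemma gX: "i < d \<Longrightarrow> j < n \<Longrightarrow> good (MX d n) (\<lambda>f. f (i,j))"
  by (rule good_coord) auto

lemma gW: "i < d \<Longrightarrow> good (MW d) (\<lambda>g. g i)"
  by (rule good_coord) auto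

lemma good_Bc: assumes "a < d" "b < d" shows "good (MX d n) (\<lambda>f. Bc n f a b)"
  unfolding Bc_def
  by (rule good_sum[OF _ fm_PG]) (use assms in \<open>auto intro!: good_mult gX\<close>)

lemma good_Ac: assumes "k < d" shows "good (MX d n) (\<lambda>f. Ac d n u f k)"
proof -
  have "good (MX d n) (\<lambda>f. \<Sum>i<d. u i * Bc n f k i)"
    by (rule good_sum[OF _ fm_PG]) (use assms in \<open>auto intro!: good_cmult good_Bc fm_PG\<close>)
  then show ?thesis by (simp add: Ac_B)
qed

lemma good_DX: "good (MX d n) F \<Longrightarrow> good (data_measure d n) (\<lambda>s. F (fst s))"
  unfolding DM_eq by (rule good_fst[OF prob_PG prob_PG])

lemma good_DW: "good (MW d) G \<Longrightarrow> good (data_measure d n) (\<lambda>s. G (snd s))"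
  unfolding DM_eq by (rule good_snd[OF prob_PG prob_PG])

lemma ED_sumprod:
  assumes A: "finite A" and FG: "\<And>x. x \<in> A \<Longrightarrow> good (MX d n) (F x)" "\<And>x. x \<in> A \<Longrightarrow> good (MW d) (G x)"
  shows "integral\<^sup>L (data_measure d n) (\<lambda>s. \<Sum>x\<in>A. F x (fst s) * G x (snd s))
       = (\<Sum>x\<in>A. integral\<^sup>L (MX d n) (F x) * integral\<^sup>L (MW d) (G x))"
proof -
  have "integral\<^sup>L (data_measure d n) (\<lambda>s. \<Sum>x\<in>A. F x (fst s) * G x (snd s))
      = (\<Sum>x\<in>A. integral\<^sup>L (data_measure d n) (\<lambda>s. F x (fst s) * G x (snd s)))"
    by (rule Bochner_Integration.integral_sum[where f="\<lambda>x s. F x (fst s) * G x (snd s)"]) (unfold DM_eq, rule pair_factor_int[OF prob_PG prob_PG good_integrable good_integrable], (use FG in auto)+)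
  also have "\<dots> = (\<Sum>x\<in>A. integral\<^sup>L (MX d n) (F x) * integral\<^sup>L (MW d) (G x))"
    by (rule sum.cong[OF refl]) (unfold DM_eq, rule pair_factor_eq[OF prob_PG prob_PG good_integrable good_integrable], (use FG in auto)+)
  finally show ?thesis .
qed

lemma EW1: "p < d \<Longrightarrow> integral\<^sup>L (MW d) (\<lambda>g. g p) = 0"
  by (rule mom1) auto
lemma EW2: "p < d \<Longrightarrow> q < d \<Longrightarrow> integral\<^sup>L (MW d) (\<lambda>g. g p * g q) = (if p = q then 1 else 0)"
  by (rule mom2) auto
lemma EW3: "p < d \<Longrightarrow> a < d \<Longrightarrow> b < d \<Longrightarrow> integral\<^sup>L (MW d) (\<lambda>g. g p * (g a * g b)) = 0"
  using mom3[of "{..<d}" p a b] by (simp add: mult.assoc)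

lemma gW2: "p < d \<Longrightarrow> q < d \<Longrightarrow> good (MW d) (\<lambda>g. g p * g q)"
  by (intro good_mult gW)
lemma gW3: "p < d \<Longrightarrow> a < d \<Longrightarrow> b < d \<Longrightarrow> good (MW d) (\<lambda>g. g p * (g a * g b))"
  by (intro good_mult gW)

lemma EX1: assumes "a < d" "b < d"
  shows "integral\<^sup>L (MX d n) (\<lambda>f. Bc n f a b) = real n * (if a = b then 1 else 0)"
proof -
  have "integral\<^sup>L (MX d n) (\<lambda>f. Bc n f a b) = (\<Sum>j<n. integral\<^sup>L (MX d n) (\<lambda>f. f (a,j) * f (b,j)))"
    unfolding Bc_def
    by (rule Bochner_Integration.integral_sum[where f="\<lambda>j f. f (a,j) * f (b,j)"])
       (use assms in \<open>auto intro!: good_integrable good_mult gX\<close>)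
  also have "\<dots> = (\<Sum>j<n. (if a = b then 1 else 0))"
    by (rule sum.cong[OF refl]) (use assms in \<open>auto simp: mom2\<close>)
  finally show ?thesis by simp
qed

lemma EX2: assumes m: "m < d" and i: "i < d"
  shows "(\<Sum>p<d. integral\<^sup>L (MX d n) (\<lambda>f. Bc n f m p * Bc n f i p))
     = real n * (real n + real d + 1) * (if m = i then 1 else 0)"
proof -
  have e: "\<And>p. p < d \<Longrightarrow> integral\<^sup>L (MX d n) (\<lambda>f. Bc n f m p * Bc n f i p)
     = (\<Sum>j<n. \<Sum>j'<n. (if m = p \<and> i = p then 1 else 0) + (if m = i \<and> j = j' then 1 else 0)
           + (if m = p \<and> j = j' \<and> p = i then 1 else 0))"
  proof -
    fix p assume p: "p < d"
    have "integral\<^sup>L (MX d n) (\<lambda>f. Bc n f m p * Bc n f i p)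
       = integral\<^sup>L (MX d n) (\<lambda>f. \<Sum>j<n. \<Sum>j'<n. f (m,j) * f (p,j) * f (i,j') * f (p,j'))"
      unfolding Bc_def sum_product by (simp add: mult_ac)
    also have "\<dots> = (\<Sum>j<n. integral\<^sup>L (MX d n) (\<lambda>f. \<Sum>j'<n. f (m,j) * f (p,j) * f (i,j') * f (p,j')))"
      by (rule Bochner_Integration.integral_sum[where f="\<lambda>j f. \<Sum>j'<n. f (m,j) * f (p,j) * f (i,j') * f (p,j')"])
         (use m i p in \<open>auto intro!: good_integrable good_sum fm_PG good_mult gX\<close>)
    also have "\<dots> = (\<Sum>j<n. \<Sum>j'<n. integral\<^sup>L (MX d n) (\<lambda>f. f (m,j) * f (p,j) * f (i,j') * f (p,j')))"
    proof (rule sum.cong[OF refl])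
      fix j assume j: "j \<in> {..<n}"
      show "integral\<^sup>L (MX d n) (\<lambda>f. \<Sum>j'<n. f (m,j) * f (p,j) * f (i,j') * f (p,j'))
          = (\<Sum>j'<n. integral\<^sup>L (MX d n) (\<lambda>f. f (m,j) * f (p,j) * f (i,j') * f (p,j')))"
        by (rule Bochner_Integration.integral_sum[where f="\<lambda>j' f. f (m,j) * f (p,j) * f (i,j') * f (p,j')"])
           (use m i p j in \<open>auto intro!: good_integrable good_mult gX\<close>)
    qed
    also have "\<dots> = (\<Sum>j<n. \<Sum>j'<n. (if m = p \<and> i = p then 1 else 0) + (if m = i \<and> j = j' then 1 else 0)
           + (if m = p \<and> j = j' \<and> p = i then 1 else 0))"
      by (intro sum.cong refl) (use m i p in \<open>auto simp: mom4\<close>)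
    finally show "integral\<^sup>L (MX d n) (\<lambda>f. Bc n f m p * Bc n f i p)
     = (\<Sum>j<n. \<Sum>j'<n. (if m = p \<and> i = p then 1 else 0) + (if m = i \<and> j = j' then 1 else 0)
           + (if m = p \<and> j = j' \<and> p = i then 1 else 0))" .
  qed
  have "(\<Sum>p<d. integral\<^sup>L (MX d n) (\<lambda>f. Bc n f m p * Bc n f i p))
     = (\<Sum>p<d. \<Sum>j<n. \<Sum>j'<n. (if m = p \<and> i = p then 1 else 0) + (if m = i \<and> j = j' then 1 else 0)
           + (if m = p \<and> j = j' \<and> p = i then 1 else 0))"
    by (rule sum.cong[OF refl]) (simp add: e)
  also have "\<dots> = real n * (real n + real d + 1) * (if m = i then 1 else 0)"
  proof (cases "m = i")
    case False
    have "(\<Sum>p<d. \<Sum>j<n. \<Sum>j'<n. (if m = p \<and> i = p then 1 else 0) + (if m = i \<and> j = j' then 1 else 0)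
           + (if m = p \<and> j = j' \<and> p = i then 1 else 0)) = (\<Sum>p<d. \<Sum>j<n. \<Sum>j'<n. (0::real))"
      using False by (intro sum.cong refl) auto
    then show ?thesis using False by simp
  next
    case True
    have "(\<Sum>p<d. \<Sum>j<n. \<Sum>j'<n. (if m = p \<and> i = p then 1 else 0) + (if m = i \<and> j = j' then 1 else 0)
           + (if m = p \<and> j = j' \<and> p = i then 1 else 0))
       = (\<Sum>p<d. \<Sum>j<n. \<Sum>j'<n. (if p = m then 1 else 0) + (if j' = j then 1 else 0)
           + (if p = m then (if j' = j then 1 else 0) else 0 :: real))"
      using True by (intro sum.cong refl) auto
    also have "\<dots> = (\<Sum>p<d. \<Sum>j<n. \<Sum>j'<n. (if p = m then 1 else 0 :: real))
       + (\<Sum>p<d. \<Sum>j<n. \<Sum>j'<n. (if j' = j then 1 else 0 :: real))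
       + (\<Sum>p<d. \<Sum>j<n. \<Sum>j'<n. (if p = m then (if j' = j then 1 else 0) else 0 :: real))"
      by (simp only: sum.distrib)
    also have "(\<Sum>p<d. \<Sum>j<n. \<Sum>j'<n. (if p = m then 1 else 0 :: real)) = real n * real n"
    proof -
      have "(\<Sum>p<d. \<Sum>j<n. \<Sum>j'<n. (if p = m then 1 else 0 :: real)) = (\<Sum>p<d. if p = m then real n * real n else 0)"
        by (intro sum.cong refl) simp
      also have "\<dots> = real n * real n" using m by simp
      finally show ?thesis .
    qed
    also have "(\<Sum>p<d. \<Sum>j<n. \<Sum>j'<n. (if j' = j then 1 else 0 :: real)) = real d * real n"
    proof -
      have "(\<Sum>p<d. \<Sum>j<n. \<Sum>j'<n. (if j' = j then 1 else 0 :: real)) = (\<Sum>p<d. \<Sum>j<n. (1::real))"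
        by (intro sum.cong refl) simp
      then show ?thesis by simp
    qed
    also have "(\<Sum>p<d. \<Sum>j<n. \<Sum>j'<n. (if p = m then (if j' = j then 1 else 0) else 0 :: real)) = real n"
    proof -
      have "(\<Sum>p<d. \<Sum>j<n. \<Sum>j'<n. (if p = m then (if j' = j then 1 else 0) else 0 :: real)) = (\<Sum>p<d. if p = m then real n else 0)"
        by (intro sum.cong refl) simp
      also have "\<dots> = real n" using m by simp
      finally show ?thesis .
    qed
    finally show ?thesis using True by (simp add: algebra_simps)
  qed
  finally show ?thesis .
qed

abbreviation DM where "DM d n \<equiv> data_measure d n"

lemma gDB: "a < d \<Longrightarrow> b < d \<Longrightarrow> good (DM d n) (\<lambda>s. Bc n (fst s) a b)"
  by (rule good_DX) (rule good_Bc)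
lemma gDg: "i < d \<Longrightarrow> good (DM d n) (\<lambda>s. snd s i)"
  by (rule good_DW[of d "\<lambda>g. g i"]) (rule gW)
lemma gDA: "k < d \<Longrightarrow> good (DM d n) (\<lambda>s. Ac d n u (fst s) k)"
  by (rule good_DX[of d n "\<lambda>f. Ac d n u f k"]) (rule good_Ac)

lemma gDP: assumes "k < d" shows "good (DM d n) (\<lambda>s. Pc d n (fst s) (snd s) k)"
proof -
  have "good (DM d n) (\<lambda>s. \<Sum>p<d. Bc n (fst s) k p * snd s p)"
    by (rule good_sum[OF _ fm_DM]) (use assms in \<open>auto intro!: good_mult gDB gDg\<close>)
  then show ?thesis by (simp add: Pc_B)
qed

lemma gDQ: "good (DM d n) (\<lambda>s. Qc d n (fst s) (snd s))"
proof -
  have "good (DM d n) (\<lambda>s. \<Sum>a<d. \<Sum>b<d. Bc n (fst s) a b * (snd s a * snd s b))"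
    by (intro good_sum[OF _ fm_DM] good_mult gDB gDg) auto
  then show ?thesis by (simp add: Qc_B)
qed

lemma gDFG: "good (MX d n) F \<Longrightarrow> good (MW d) G \<Longrightarrow> good (DM d n) (\<lambda>s. F (fst s) * G (snd s))"
  by (intro good_mult good_DX good_DW)

lemma ED_sumprod2:
  assumes A: "finite A" "finite B" and FG: "\<And>x y. x \<in> A \<Longrightarrow> y \<in> B \<Longrightarrow> good (MX d n) (F x y)"
    "\<And>x y. x \<in> A \<Longrightarrow> y \<in> B \<Longrightarrow> good (MW d) (G x y)"
  shows "integral\<^sup>L (DM d n) (\<lambda>s. \<Sum>x\<in>A. \<Sum>y\<in>B. F x y (fst s) * G x y (snd s))
       = (\<Sum>x\<in>A. \<Sum>y\<in>B. integral\<^sup>L (MX d n) (F x y) * integral\<^sup>L (MW d) (G x y))"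
proof -
  have "integral\<^sup>L (DM d n) (\<lambda>s. \<Sum>x\<in>A. \<Sum>y\<in>B. F x y (fst s) * G x y (snd s))
      = (\<Sum>x\<in>A. integral\<^sup>L (DM d n) (\<lambda>s. \<Sum>y\<in>B. F x y (fst s) * G x y (snd s)))"
    by (rule Bochner_Integration.integral_sum[where f="\<lambda>x s. \<Sum>y\<in>B. F x y (fst s) * G x y (snd s)"])
       (rule good_integrable, rule good_sum[OF _ fm_DM], rule gDFG, (use FG in auto)+)
  also have "\<dots> = (\<Sum>x\<in>A. \<Sum>y\<in>B. integral\<^sup>L (MX d n) (F x y) * integral\<^sup>L (MW d) (G x y))"
    by (rule sum.cong[OF refl]) (rule ED_sumprod, (use FG A in auto)+)
  finally show ?thesis .
qed

lemma ED_sumprod3: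
  assumes A: "finite A" "finite B" "finite C" and FG: "\<And>x y z. x \<in> A \<Longrightarrow> y \<in> B \<Longrightarrow> z \<in> C \<Longrightarrow> good (MX d n) (F x y z)"
    "\<And>x y z. x \<in> A \<Longrightarrow> y \<in> B \<Longrightarrow> z \<in> C \<Longrightarrow> good (MW d) (G x y z)"
  shows "integral\<^sup>L (DM d n) (\<lambda>s. \<Sum>x\<in>A. \<Sum>y\<in>B. \<Sum>z\<in>C. F x y z (fst s) * G x y z (snd s))
       = (\<Sum>x\<in>A. \<Sum>y\<in>B. \<Sum>z\<in>C. integral\<^sup>L (MX d n) (F x y z) * integral\<^sup>L (MW d) (G x y z))"
proof -
  have "integral\<^sup>L (DM d n) (\<lambda>s. \<Sum>x\<in>A. \<Sum>y\<in>B. \<Sum>z\<in>C. F x y z (fst s) * G x y z (snd s))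
      = (\<Sum>x\<in>A. integral\<^sup>L (DM d n) (\<lambda>s. \<Sum>y\<in>B. \<Sum>z\<in>C. F x y z (fst s) * G x y z (snd s)))"
    by (rule Bochner_Integration.integral_sum[where f="\<lambda>x s. \<Sum>y\<in>B. \<Sum>z\<in>C. F x y z (fst s) * G x y z (snd s)"])
       (rule good_integrable, rule good_sum[OF _ fm_DM], rule good_sum[OF _ fm_DM], rule gDFG, (use FG in auto)+)
  also have "\<dots> = (\<Sum>x\<in>A. \<Sum>y\<in>B. \<Sum>z\<in>C. integral\<^sup>L (MX d n) (F x y z) * integral\<^sup>L (MW d) (G x y z))"
    by (rule sum.cong[OF refl]) (rule ED_sumprod2, (use FG A in auto)+)
  finally show ?thesis .
qed

lemma M_PA: assumes "m < d" "k < d"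
  shows "integral\<^sup>L (DM d n) (\<lambda>s. Pc d n (fst s) (snd s) m * Ac d n u (fst s) k) = 0"
proof -
  have eq: "(\<lambda>s. Pc d n (fst s) (snd s) m * Ac d n u (fst s) k)
      = (\<lambda>s. \<Sum>p\<in>{..<d}. (\<lambda>p f. Bc n f m p * Ac d n u f k) p (fst s) * (\<lambda>p g. g p) p (snd s))"
    by (rule ext) (simp add: Pc_B sum_distrib_left sum_distrib_right mult_ac)
  have "integral\<^sup>L (DM d n) (\<lambda>s. \<Sum>p\<in>{..<d}. (\<lambda>p f. Bc n f m p * Ac d n u f k) p (fst s) * (\<lambda>p g. g p) p (snd s))
     = (\<Sum>p\<in>{..<d}. integral\<^sup>L (MX d n) (\<lambda>f. Bc n f m p * Ac d n u f k) * integral\<^sup>L (MW d) (\<lambda>g. g p))"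
    by (rule ED_sumprod) (use assms in \<open>auto intro!: good_mult good_Bc good_Ac gW\<close>)
  also have "\<dots> = 0" by (simp add: EW1)
  finally show ?thesis unfolding eq .
qed

lemma M_P: assumes "m < d"
  shows "integral\<^sup>L (DM d n) (\<lambda>s. Pc d n (fst s) (snd s) m) = 0"
proof -
  have eq: "(\<lambda>s. Pc d n (fst s) (snd s) m)
      = (\<lambda>s. \<Sum>p\<in>{..<d}. (\<lambda>p f. Bc n f m p) p (fst s) * (\<lambda>p g. g p) p (snd s))"
    by (rule ext) (simp add: Pc_B)
  have "integral\<^sup>L (DM d n) (\<lambda>s. \<Sum>p\<in>{..<d}. (\<lambda>p f. Bc n f m p) p (fst s) * (\<lambda>p g. g p) p (snd s))
     = (\<Sum>p\<in>{..<d}. integral\<^sup>L (MX d n) (\<lambda>f. Bc n f m p) * integral\<^sup>L (MW d) (\<lambda>g. g p))"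
    by (rule ED_sumprod) (use assms in \<open>auto intro!: good_Bc gW\<close>)
  also have "\<dots> = 0" by (simp add: EW1)
  finally show ?thesis unfolding eq .
qed

lemma M_gA: assumes "m < d" "k < d"
  shows "integral\<^sup>L (DM d n) (\<lambda>s. snd s m * Ac d n u (fst s) k) = 0"
proof -
  have eq: "(\<lambda>s. snd s m * Ac d n u (fst s) k) = (\<lambda>s. (\<lambda>f. Ac d n u f k) (fst s) * (\<lambda>g. g m) (snd s))"
    by (rule ext) simp
  have "integral\<^sup>L (DM d n) (\<lambda>s. (\<lambda>f. Ac d n u f k) (fst s) * (\<lambda>g. g m) (snd s))
      = integral\<^sup>L (MX d n) (\<lambda>f. Ac d n u f k) * integral\<^sup>L (MW d) (\<lambda>g. g m)"
    unfolding DM_eq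
    by (rule pair_factor_eq[OF prob_PG prob_PG good_integrable good_integrable])
       (use assms in \<open>auto intro!: good_Ac gW\<close>)
  also have "\<dots> = 0" using assms by (simp add: EW1)
  finally show ?thesis unfolding eq .
qed

lemma M_g: assumes "m < d"
  shows "integral\<^sup>L (DM d n) (\<lambda>s. snd s m) = 0"
proof -
  have eq: "(\<lambda>s. snd s m) = (\<lambda>s. (\<lambda>f. 1::real) (fst s) * (\<lambda>g. g m) (snd s))"
    by (rule ext) simp
  have "integral\<^sup>L (DM d n) (\<lambda>s. (\<lambda>f. 1::real) (fst s) * (\<lambda>g. g m) (snd s))
      = integral\<^sup>L (MX d n) (\<lambda>f. 1) * integral\<^sup>L (MW d) (\<lambda>g. g m)"
    unfolding DM_eq
    by (rule pair_factor_eq[OF prob_PG prob_PG good_integrable good_integrable])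
       (use assms in \<open>auto intro!: good_const fm_PG gW\<close>)
  also have "\<dots> = 0" using assms by (simp add: EW1)
  finally show ?thesis unfolding eq .
qed

lemma M_PQ: assumes "m < d"
  shows "integral\<^sup>L (DM d n) (\<lambda>s. Pc d n (fst s) (snd s) m * Qc d n (fst s) (snd s)) = 0"
proof -
  have eq: "(\<lambda>s. Pc d n (fst s) (snd s) m * Qc d n (fst s) (snd s))
      = (\<lambda>s. \<Sum>p\<in>{..<d}. \<Sum>a\<in>{..<d}. \<Sum>b\<in>{..<d}. (\<lambda>p a b f. Bc n f m p * Bc n f a b) p a b (fst s)
             * (\<lambda>p a b g. g p * (g a * g b)) p a b (snd s))"
    apply (rule ext)
    apply (simp only: Pc_B Qc_B)
    apply (subst sum_distrib_right)
    apply (simp only: sum_distrib_left)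
    apply (simp add: mult_ac)
    done
  have "integral\<^sup>L (DM d n) (\<lambda>s. \<Sum>p\<in>{..<d}. \<Sum>a\<in>{..<d}. \<Sum>b\<in>{..<d}. (\<lambda>p a b f. Bc n f m p * Bc n f a b) p a b (fst s)
             * (\<lambda>p a b g. g p * (g a * g b)) p a b (snd s))
     = (\<Sum>p\<in>{..<d}. \<Sum>a\<in>{..<d}. \<Sum>b\<in>{..<d}. integral\<^sup>L (MX d n) (\<lambda>f. Bc n f m p * Bc n f a b)
             * integral\<^sup>L (MW d) (\<lambda>g. g p * (g a * g b)))"
    by (rule ED_sumprod3) (use assms in \<open>auto intro!: good_mult good_Bc gW3 gW\<close>)
  also have "\<dots> = 0" by (simp add: EW3)
  finally show ?thesis unfolding eq .
qed

lemma M_gQ: assumes "m < d"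
  shows "integral\<^sup>L (DM d n) (\<lambda>s. snd s m * Qc d n (fst s) (snd s)) = 0"
proof -
  have eq: "(\<lambda>s. snd s m * Qc d n (fst s) (snd s))
      = (\<lambda>s. \<Sum>a\<in>{..<d}. \<Sum>b\<in>{..<d}. (\<lambda>a b f. Bc n f a b) a b (fst s)
             * (\<lambda>a b g. g m * (g a * g b)) a b (snd s))"
    by (rule ext) (simp add: Qc_B sum_distrib_left sum_distrib_right mult_ac)
  have "integral\<^sup>L (DM d n) (\<lambda>s. \<Sum>a\<in>{..<d}. \<Sum>b\<in>{..<d}. (\<lambda>a b f. Bc n f a b) a b (fst s)
             * (\<lambda>a b g. g m * (g a * g b)) a b (snd s))
     = (\<Sum>a\<in>{..<d}. \<Sum>b\<in>{..<d}. integral\<^sup>L (MX d n) (\<lambda>f. Bc n f a b)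
             * integral\<^sup>L (MW d) (\<lambda>g. g m * (g a * g b)))"
    by (rule ED_sumprod2) (use assms in \<open>auto intro!: good_Bc gW3\<close>)
  also have "\<dots> = 0" using assms by (simp add: EW3)
  finally show ?thesis unfolding eq .
qed

lemma M_PP: assumes "m < d" "i < d"
  shows "integral\<^sup>L (DM d n) (\<lambda>s. Pc d n (fst s) (snd s) m * Pc d n (fst s) (snd s) i)
     = real n * (real n + real d + 1) * (if m = i then 1 else 0)"
proof -
  have eq: "(\<lambda>s. Pc d n (fst s) (snd s) m * Pc d n (fst s) (snd s) i)
      = (\<lambda>s. \<Sum>p\<in>{..<d}. \<Sum>q\<in>{..<d}. (\<lambda>p q f. Bc n f m p * Bc n f i q) p q (fst s)
             * (\<lambda>p q g. g p * g q) p q (snd s))"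
    by (rule ext) (simp add: Pc_B sum_distrib_left sum_distrib_right mult_ac)
  have "integral\<^sup>L (DM d n) (\<lambda>s. \<Sum>p\<in>{..<d}. \<Sum>q\<in>{..<d}. (\<lambda>p q f. Bc n f m p * Bc n f i q) p q (fst s)
             * (\<lambda>p q g. g p * g q) p q (snd s))
      = (\<Sum>p\<in>{..<d}. \<Sum>q\<in>{..<d}. integral\<^sup>L (MX d n) (\<lambda>f. Bc n f m p * Bc n f i q)
             * integral\<^sup>L (MW d) (\<lambda>g. g p * g q))"
    by (rule ED_sumprod2) (use assms in \<open>auto intro!: good_mult good_Bc gW2\<close>)
  also have "\<dots> = (\<Sum>p<d. \<Sum>q<d. integral\<^sup>L (MX d n) (\<lambda>f. Bc n f m p * Bc n f i q) * (if p = q then 1 else 0))"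
    by (intro sum.cong refl) (simp add: EW2)
  also have "\<dots> = (\<Sum>p<d. integral\<^sup>L (MX d n) (\<lambda>f. Bc n f m p * Bc n f i p))"
    by (intro sum.cong refl) (simp add: if_distrib cong: if_cong)
  also have "\<dots> = real n * (real n + real d + 1) * (if m = i then 1 else 0)"
    by (rule EX2[OF assms])
  finally show ?thesis unfolding eq .
qed

lemma M_gP: assumes "m < d" "i < d"
  shows "integral\<^sup>L (DM d n) (\<lambda>s. snd s m * Pc d n (fst s) (snd s) i) = real n * (if m = i then 1 else 0)"
proof -
  have eq: "(\<lambda>s. snd s m * Pc d n (fst s) (snd s) i)
      = (\<lambda>s. \<Sum>q\<in>{..<d}. (\<lambda>q f. Bc n f i q) q (fst s) * (\<lambda>q g. g m * g q) q (snd s))"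
    by (rule ext) (simp add: Pc_B sum_distrib_left mult_ac)
  have "integral\<^sup>L (DM d n) (\<lambda>s. \<Sum>q\<in>{..<d}. (\<lambda>q f. Bc n f i q) q (fst s) * (\<lambda>q g. g m * g q) q (snd s))
      = (\<Sum>q\<in>{..<d}. integral\<^sup>L (MX d n) (\<lambda>f. Bc n f i q) * integral\<^sup>L (MW d) (\<lambda>g. g m * g q))"
    by (rule ED_sumprod) (use assms in \<open>auto intro!: good_Bc gW2\<close>)
  also have "\<dots> = (\<Sum>q<d. integral\<^sup>L (MX d n) (\<lambda>f. Bc n f i q) * (if m = q then 1 else 0))"
    using assms by (intro sum.cong refl) (simp add: EW2)
  also have "\<dots> = integral\<^sup>L (MX d n) (\<lambda>f. Bc n f i m)"
    using assms by (simp add: if_distrib cong: if_cong)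
  also have "\<dots> = real n * (if m = i then 1 else 0)" using EX1[OF assms(2,1)] by auto
  finally show ?thesis unfolding eq .
qed

definition cc :: "nat \<Rightarrow> nat \<Rightarrow> real" where "cc d n = 1 / (real n + real d + 1)"

definition TT :: "nat \<Rightarrow> nat \<Rightarrow> nat \<Rightarrow> (nat \<times> nat \<Rightarrow> real) \<times> (nat \<Rightarrow> real) \<Rightarrow> real" where
  "TT d n m s = cc d n * Pc d n (fst s) (snd s) m - snd s m"

definition orth :: "nat \<Rightarrow> nat \<Rightarrow> nat \<Rightarrow> ((nat \<times> nat \<Rightarrow> real) \<times> (nat \<Rightarrow> real) \<Rightarrow> real) \<Rightarrow> bool" where
  "orth d n m h \<longleftrightarrow> good (DM d n) h \<and> integral\<^sup>L (DM d n) (\<lambda>s. TT d n m s * h s) = 0"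

lemma good_TT: "m < d \<Longrightarrow> good (DM d n) (TT d n m)"
proof -
  assume m: "m < d"
  have "good (DM d n) (\<lambda>s. cc d n * Pc d n (fst s) (snd s) m - snd s m)"
    by (intro good_diff good_cmult gDP gDg fm_DM m)
  then show ?thesis unfolding TT_def[abs_def] .
qed

lemma orth_add: assumes "m < d" "orth d n m h1" "orth d n m h2" shows "orth d n m (\<lambda>s. h1 s + h2 s)"
proof -
  have i1: "integrable (DM d n) (\<lambda>s. TT d n m s * h1 s)" and i2: "integrable (DM d n) (\<lambda>s. TT d n m s * h2 s)"
    using assms by (auto simp: orth_def intro!: good_integrable good_mult good_TT)
  have "integral\<^sup>L (DM d n) (\<lambda>s. TT d n m s * (h1 s + h2 s))
     = integral\<^sup>L (DM d n) (\<lambda>s. TT d n m s * h1 s + TT d n m s * h2 s)" by (simp add: distrib_left)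
  also have "\<dots> = 0" using Bochner_Integration.integral_add[OF i1 i2] assms by (simp add: orth_def)
  finally show ?thesis using assms by (auto simp: orth_def intro!: good_add)
qed

lemma orth_cmult: assumes "orth d n m h" shows "orth d n m (\<lambda>s. a * h s)"
proof -
  have "integral\<^sup>L (DM d n) (\<lambda>s. TT d n m s * (a * h s)) = a * integral\<^sup>L (DM d n) (\<lambda>s. TT d n m s * h s)"
    by (simp add: mult.left_commute)
  then show ?thesis using assms by (auto simp: orth_def intro!: good_cmult fm_DM)
qed

lemma orth_sum: assumes "m < d" "\<And>i. i \<in> A \<Longrightarrow> orth d n m (h i)" shows "orth d n m (\<lambda>s. \<Sum>i\<in>A. h i s)"
  using assms(2)
proof (induct A rule: infinite_finite_induct)
  case (infinite A) then show ?case
    by (simp add: orth_def good_const[OF fm_DM])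
next
  case empty then show ?case by (simp add: orth_def good_const[OF fm_DM])
next
  case (insert a A)
  have "orth d n m (\<lambda>s. h a s + (\<Sum>i\<in>A. h i s))"
    by (rule orth_add[OF assms(1)]) (use insert in auto)
  then show ?case using insert(1,2) by simp
qed

lemma orth_A: "m < d \<Longrightarrow> k < d \<Longrightarrow> orth d n m (\<lambda>s. Ac d n u (fst s) k)"
  unfolding orth_def TT_def
  by (simp add: gDA left_diff_distrib mult.assoc Bochner_Integration.integral_diff[OF good_integrable good_integrable]
      good_mult good_cmult gDP gDg gDA fm_DM M_PA M_gA)

lemma orth_Q: "m < d \<Longrightarrow> orth d n m (\<lambda>s. Qc d n (fst s) (snd s))"
  unfolding orth_def TT_def
  by (simp add: gDQ left_diff_distrib mult.assoc Bochner_Integration.integral_diff[OF good_integrable good_integrable]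
      good_mult good_cmult gDP gDg gDQ fm_DM M_PQ M_gQ)

lemma orth_1: "m < d \<Longrightarrow> orth d n m (\<lambda>s. 1)"
  unfolding orth_def TT_def
  by (simp add: good_const fm_DM Bochner_Integration.integral_diff[OF good_integrable good_integrable]
      good_cmult gDP gDg M_P M_g)

lemma orth_P: assumes "m < d" "i < d" shows "orth d n m (\<lambda>s. Pc d n (fst s) (snd s) i)"
proof -
  have "integral\<^sup>L (DM d n) (\<lambda>s. TT d n m s * Pc d n (fst s) (snd s) i)
     = cc d n * integral\<^sup>L (DM d n) (\<lambda>s. Pc d n (fst s) (snd s) m * Pc d n (fst s) (snd s) i)
       - integral\<^sup>L (DM d n) (\<lambda>s. snd s m * Pc d n (fst s) (snd s) i)"
    unfolding TT_def
    using assms by (simp add: left_diff_distrib mult.assoc Bochner_Integration.integral_diff[OF good_integrable good_integrable]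
      good_mult good_cmult gDP gDg fm_DM)
  also have "\<dots> = 0" using assms by (simp add: M_PP M_gP cc_def)
  finally show ?thesis using assms by (simp add: orth_def gDP)
qed

lemma orth_const: "m < d \<Longrightarrow> orth d n m (\<lambda>s. a)"
  using orth_cmult[OF orth_1, of m d n a] by simp

lemma orth_GG: assumes m: "m < d" shows "orth d n m (\<lambda>s. GGc d n V W (fst s) (snd s) r)"
proof -
  have "orth d n m (\<lambda>s. (\<Sum>k<d. V $$ (r,k) * (Ac d n (\<lambda>i. W $$ (i, 2*d+1)) (fst s) k + W $$ (d, 2*d+1) * Pc d n (fst s) (snd s) k))
   + V $$ (r,d) * ((\<Sum>i<d. W $$ (i, 2*d+1) * Pc d n (fst s) (snd s) i) + W $$ (d, 2*d+1) * Qc d n (fst s) (snd s))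
   + V $$ (r,2*d+1) * W $$ (2*d+1, 2*d+1))"
    by (intro orth_add orth_sum orth_cmult orth_A orth_P orth_Q orth_const m) auto
  then show ?thesis by (simp only: GGc_decomp)
qed

definition es :: "nat \<Rightarrow> nat \<Rightarrow> (nat \<times> nat \<Rightarrow> real) \<Rightarrow> (nat \<Rightarrow> real) \<Rightarrow> nat \<Rightarrow> real" where
  "es d n f g r = (if d < r \<and> r \<le> 2*d then cc d n * Pc d n f g (r-d-1) - g (r-d-1) else 0)"

definition DD :: "nat \<Rightarrow> nat \<Rightarrow> real mat \<Rightarrow> real mat \<Rightarrow> (nat \<times> nat \<Rightarrow> real) \<Rightarrow> (nat \<Rightarrow> real) \<Rightarrow> nat \<Rightarrow> real" where
  "DD d n V W f g r = GGc d n V W f g r / real n - (if d < r \<and> r \<le> 2*d then cc d n * Pc d n f g (r-d-1) else 0)"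

lemma good_GGc: "good (DM d n) (\<lambda>s. GGc d n V W (fst s) (snd s) r)"
proof -
  have "good (DM d n) (\<lambda>s. (\<Sum>k<d. V $$ (r,k) * (Ac d n (\<lambda>i. W $$ (i, 2*d+1)) (fst s) k + W $$ (d, 2*d+1) * Pc d n (fst s) (snd s) k))
   + V $$ (r,d) * ((\<Sum>i<d. W $$ (i, 2*d+1) * Pc d n (fst s) (snd s) i) + W $$ (d, 2*d+1) * Qc d n (fst s) (snd s))
   + V $$ (r,2*d+1) * W $$ (2*d+1, 2*d+1))"
    by (intro good_add good_sum good_cmult gDA gDP gDQ good_const fm_DM) auto
  then show ?thesis by (simp only: GGc_decomp)
qed

lemma good_es: "good (DM d n) (\<lambda>s. es d n (fst s) (snd s) r)"
proof (cases "d < r \<and> r \<le> 2*d")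
  case True
  then have "r - d - 1 < d" by auto
  then have "good (DM d n) (\<lambda>s. cc d n * Pc d n (fst s) (snd s) (r-d-1) - snd s (r-d-1))"
    by (intro good_diff good_cmult gDP gDg fm_DM)
  then show ?thesis using True by (simp add: es_def)
next
  case False then show ?thesis by (simp add: es_def good_const fm_DM if_not_P[OF False])
qed

lemma good_DD: "good (DM d n) (\<lambda>s. DD d n V W (fst s) (snd s) r)"
proof (cases "d < r \<and> r \<le> 2*d")
  case True
  then have "r - d - 1 < d" by auto
  then have "good (DM d n) (\<lambda>s. (1 / real n) * GGc d n V W (fst s) (snd s) r - cc d n * Pc d n (fst s) (snd s) (r-d-1))"
    by (intro good_diff good_cmult gDP good_GGc fm_DM)
  then show ?thesis using True by (simp add: DD_def)
next
  case False
  have "good (DM d n) (\<lambda>s. (1 / real n) * GGc d n V W (fst s) (snd s) r)"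
    by (intro good_cmult good_GGc fm_DM)
  then show ?thesis by (simp add: DD_def if_not_P[OF False])
qed

lemma cross0: "integral\<^sup>L (DM d n) (\<lambda>s. es d n (fst s) (snd s) r * DD d n V W (fst s) (snd s) r) = 0"
proof (cases "d < r \<and> r \<le> 2*d")
  case True
  define m where "m = r - d - 1"
  have m: "m < d" using True by (auto simp: m_def)
  have "orth d n m (\<lambda>s. (1 / real n) * GGc d n V W (fst s) (snd s) r + (- cc d n) * Pc d n (fst s) (snd s) m)"
    by (intro orth_add orth_cmult orth_GG orth_P m)
  then have "integral\<^sup>L (DM d n) (\<lambda>s. TT d n m s * ((1 / real n) * GGc d n V W (fst s) (snd s) r + (- cc d n) * Pc d n (fst s) (snd s) m)) = 0"
    by (simp add: orth_def)
  moreover have "(\<lambda>s. es d n (fst s) (snd s) r * DD d n V W (fst s) (snd s) r)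
     = (\<lambda>s. TT d n m s * ((1 / real n) * GGc d n V W (fst s) (snd s) r + (- cc d n) * Pc d n (fst s) (snd s) m))"
    using True by (auto simp: es_def DD_def TT_def m_def)
  ultimately show ?thesis by simp
next
  case False then show ?thesis by (simp add: es_def if_not_P[OF False])
qed

lemma w_of_idx: "i < d \<Longrightarrow> w_of d g $ i = g i" by (simp add: w_of_def)

lemma sq_pointwise:
  assumes V: "V \<in> carrier_mat (2*d+2) (2*d+2)" and W: "W \<in> carrier_mat (2*d+2) (2*d+2)"
  shows "sq_norm_vec (lsa_pred n (Z_in (X_of d n f) (w_of d g) (0\<^sub>v d)) V W - target d (w_of d g))
     = (\<Sum>r<2*d+2. (es d n f g r + DD d n V W f g r)^2)"
proof -
  have X: "X_of d n f \<in> carrier_mat d n" by (simp add: X_of_def)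
  have w: "w_of d g \<in> carrier_vec d" by (simp add: w_of_def)
  have comp: "\<And>r. r < 2*d+2 \<Longrightarrow> (lsa_pred n (Z_in (X_of d n f) (w_of d g) (0\<^sub>v d)) V W - target d (w_of d g)) $ r
      = es d n f g r + DD d n V W f g r"
  proof -
    fix r assume r: "r < 2*d+2"
    show "(lsa_pred n (Z_in (X_of d n f) (w_of d g) (0\<^sub>v d)) V W - target d (w_of d g)) $ r
      = es d n f g r + DD d n V W f g r"
      unfolding pred_formula[OF X w V W] using r
      by (auto simp: target_def GG_coord es_def DD_def w_of_idx)
  qed
  have dim: "dim_vec (lsa_pred n (Z_in (X_of d n f) (w_of d g) (0\<^sub>v d)) V W - target d (w_of d g)) = 2*d+2"
    unfolding pred_formula[OF X w V W] by (simp add: target_def)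
  show ?thesis
    unfolding sq_norm_vec_def scalar_prod_def dim
    by (simp add: atLeast0LessThan comp power2_eq_square)
qed

lemma loss_split:
  assumes V: "V \<in> carrier_mat (2*d+2) (2*d+2)" and W: "W \<in> carrier_mat (2*d+2) (2*d+2)"
  shows "loss_eval d n V W = ennreal ((1/2) * (integral\<^sup>L (DM d n) (\<lambda>s. \<Sum>r<2*d+2. (es d n (fst s) (snd s) r)^2)
       + integral\<^sup>L (DM d n) (\<lambda>s. \<Sum>r<2*d+2. (DD d n V W (fst s) (snd s) r)^2)))"
proof -
  let ?E = "\<lambda>s r. es d n (fst s) (snd s) r"
  let ?D = "\<lambda>s r. DD d n V W (fst s) (snd s) r"
  have iA: "integrable (DM d n) (\<lambda>s. \<Sum>r<2*d+2. (?E s r)^2)"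
    by (intro good_integrable good_sum good_power good_es fm_DM)
  have iB: "integrable (DM d n) (\<lambda>s. \<Sum>r<2*d+2. (?D s r)^2)"
    by (intro good_integrable good_sum good_power good_DD fm_DM)
  have iC: "integrable (DM d n) (\<lambda>s. \<Sum>r<2*d+2. ?E s r * ?D s r)"
    by (intro good_integrable good_sum good_mult good_DD good_es fm_DM)
  have iH: "integrable (DM d n) (\<lambda>s. (1/2) * (\<Sum>r<2*d+2. (?E s r + ?D s r)^2))"
    by (intro good_integrable good_cmult good_sum good_power good_add good_DD good_es fm_DM)
  have "loss_eval d n V W = (\<integral>\<^sup>+ s. ennreal ((1/2) * (\<Sum>r<2*d+2. (?E s r + ?D s r)^2)) \<partial>DM d n)"
    unfolding loss_eval_def using sq_pointwise[OF V W] by simp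
  also have "\<dots> = ennreal (integral\<^sup>L (DM d n) (\<lambda>s. (1/2) * (\<Sum>r<2*d+2. (?E s r + ?D s r)^2)))"
    by (rule nn_integral_eq_integral[OF iH]) (simp add: sum_nonneg)
  also have "integral\<^sup>L (DM d n) (\<lambda>s. (1/2) * (\<Sum>r<2*d+2. (?E s r + ?D s r)^2))
     = integral\<^sup>L (DM d n) (\<lambda>s. (1/2) * ((\<Sum>r<2*d+2. (?E s r)^2) + (\<Sum>r<2*d+2. (?D s r)^2)
          + 2 * (\<Sum>r<2*d+2. ?E s r * ?D s r)))"
  proof -
    have pw: "\<And>s. (\<Sum>r<2*d+2. (?E s r + ?D s r)^2) = (\<Sum>r<2*d+2. (?E s r)^2) + (\<Sum>r<2*d+2. (?D s r)^2)
          + 2 * (\<Sum>r<2*d+2. ?E s r * ?D s r)"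
      by (simp only: power2_sum sum.distrib sum_distrib_left mult.assoc)
    show ?thesis by (simp only: pw)
  qed
  also have "\<dots> = (1/2) * (integral\<^sup>L (DM d n) (\<lambda>s. \<Sum>r<2*d+2. (?E s r)^2)
       + integral\<^sup>L (DM d n) (\<lambda>s. \<Sum>r<2*d+2. (?D s r)^2)
       + 2 * integral\<^sup>L (DM d n) (\<lambda>s. \<Sum>r<2*d+2. ?E s r * ?D s r))"
  proof -
    have iAB: "integrable (DM d n) (\<lambda>s. (\<Sum>r<2*d+2. (?E s r)^2) + (\<Sum>r<2*d+2. (?D s r)^2))"
      using iA iB by (rule Bochner_Integration.integrable_add)
    have i2C: "integrable (DM d n) (\<lambda>s. 2 * (\<Sum>r<2*d+2. ?E s r * ?D s r))"
      using iC by (rule integrable_mult_right)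
    show ?thesis
      by (simp only: Bochner_Integration.integral_mult_right_zero Bochner_Integration.integral_add[OF iAB i2C]
        Bochner_Integration.integral_add[OF iA iB])
  qed
  also have "integral\<^sup>L (DM d n) (\<lambda>s. \<Sum>r<2*d+2. ?E s r * ?D s r) = 0"
  proof -
    have "integral\<^sup>L (DM d n) (\<lambda>s. \<Sum>r<2*d+2. ?E s r * ?D s r) = (\<Sum>r<2*d+2. integral\<^sup>L (DM d n) (\<lambda>s. ?E s r * ?D s r))"
      by (rule Bochner_Integration.integral_sum[where f="\<lambda>r s. es d n (fst s) (snd s) r * DD d n V W (fst s) (snd s) r"])
         (intro good_integrable good_mult good_DD good_es)
    also have "\<dots> = 0" by (simp add: cross0)
    finally show ?thesis .
  qed
  finally show ?thesis by simp
qed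

definition V0 :: "nat \<Rightarrow> nat \<Rightarrow> real mat" where
  "V0 d n = mat (2*d+2) (2*d+2) (\<lambda>(r,k). if d < r \<and> r \<le> 2*d \<and> k = r-d-1 then real n * cc d n else 0)"
definition W0 :: "nat \<Rightarrow> real mat" where
  "W0 d = mat (2*d+2) (2*d+2) (\<lambda>(i,k). if i = d \<and> k = 2*d+1 then 1 else 0)"

lemma V0_carrier: "V0 d n \<in> carrier_mat (2*d+2) (2*d+2)" by (simp add: V0_def)
lemma W0_carrier: "W0 d \<in> carrier_mat (2*d+2) (2*d+2)" by (simp add: W0_def)

lemma DD_opt: assumes n: "n \<ge> 1" and r: "r < 2*d+2" shows "DD d n (V0 d n) (W0 d) f g r = 0"
proof -
  have q: "\<And>j. qc d (W0 d) f g j = yc d f g j"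
    unfolding qc_def W0_def by simp
  have G: "GGc d n (V0 d n) (W0 d) f g r = (\<Sum>k<d. (V0 d n) $$ (r,k) * Pc d n f g k)"
    unfolding GGc_def q Pc_def using r by (auto simp: V0_def W0_def)
  show ?thesis
  proof (cases "d < r \<and> r \<le> 2*d")
    case True
    have "(\<Sum>k<d. (V0 d n) $$ (r,k) * Pc d n f g k) = (\<Sum>k<d. if k = r-d-1 then real n * cc d n * Pc d n f g k else 0)"
      using True r by (intro sum.cong refl) (simp add: V0_def)
    also have "\<dots> = real n * cc d n * Pc d n f g (r-d-1)" using True by auto
    finally show ?thesis using True n unfolding DD_def G by simp
  next
    case False
    have "(\<Sum>k<d. (V0 d n) $$ (r,k) * Pc d n f g k) = 0"
      using False r by (intro sum.neutral) (auto simp: V0_def)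
    then show ?thesis unfolding DD_def G by (simp add: if_not_P[OF False])
  qed
qed

lemma gauss_ball_pos: assumes e: "e > 0" shows "emeasure std_gauss (ball x e) > 0"
proof (rule ccontr)
  assume "\<not> emeasure std_gauss (ball x e) > 0"
  then have z: "emeasure std_gauss (ball x e) = 0" by (simp add: not_gr_zero)
  have nz: "\<And>y. std_normal_density y \<noteq> 0" proof -
    fix y have "0 < std_normal_density y" by (rule normal_density_pos) simp
    then show "std_normal_density y \<noteq> 0" by simp
  qed
  have bs[measurable]: "ball x e \<in> sets borel" by simp
  have "emeasure std_gauss (ball x e) = (\<integral>\<^sup>+ y. ennreal (std_normal_density y) * indicator (ball x e) y \<partial>lborel)"
    unfolding std_gauss_def by (rule emeasure_density) auto
  moreover have m: "(\<lambda>y. ennreal (std_normal_density y) * indicator (ball x e) y) \<in> borel_measurable lborel"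
    by measurable
  ultimately have "AE y in lborel. ennreal (std_normal_density y) * indicator (ball x e) y = 0"
    using z nn_integral_0_iff_AE[OF m] by simp
  then have "AE y in lborel. y \<notin> ball x e"
    by eventually_elim (auto simp: indicator_def nz split: if_splits)
  then have "emeasure lborel (ball x e) = 0"
    by (subst AE_iff_measurable[symmetric, where P="\<lambda>y. y \<notin> ball x e"]) auto
  moreover have "emeasure lborel (ball x e) = ennreal (2 * e)"
    using e by (simp add: ball_eq_greaterThanLessThan)
  ultimately show False using e by simp
qed

lemma fun_open_box:
  fixes A :: "('i \<Rightarrow> real) set"
  assumes A: "open A" and x: "x \<in> A"
  obtains e where "\<And>i. e i > 0" "\<And>y. (\<forall>i. y i \<in> ball (x i) (e i)) \<Longrightarrow> (\<lambda>i. if i \<in> I then y i else x i) \<in> A"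
proof -
  have "openin (product_topology (\<lambda>i. euclidean) UNIV) A" using A unfolding open_fun_def .
  from product_topology_open_contains_basis[OF this x]
  obtain Xs where Xs: "x \<in> (\<Pi>\<^sub>E i\<in>UNIV. Xs i)" "\<And>i. openin euclidean (Xs i)" "(\<Pi>\<^sub>E i\<in>UNIV. Xs i) \<subseteq> A"
    by (elim exE conjE) (simp only:)
  have "\<forall>i. \<exists>e>0. ball (x i) e \<subseteq> Xs i"
  proof
    fix i
    have "open (Xs i)" using Xs(2)[of i] by (subst open_openin)
    moreover have "x i \<in> Xs i" using Xs(1) unfolding PiE_def Pi_def by blast
    ultimately show "\<exists>e>0. ball (x i) e \<subseteq> Xs i" by (rule open_contains_ball_eq[THEN iffD1])
  qed
  then have "\<exists>e. \<forall>i. e i > 0 \<and> ball (x i) (e i) \<subseteq> Xs i" by (rule choice)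
  then obtain e where e0: "\<forall>i. e i > 0 \<and> ball (x i) (e i) \<subseteq> Xs i" by blast
  have e: "\<And>i. e i > 0" "\<And>i. ball (x i) (e i) \<subseteq> Xs i" using e0 by auto
  show ?thesis
  proof (rule that[of e])
    show "\<And>i. e i > 0" by (rule e(1))
    fix y assume y: "\<forall>i. y i \<in> ball (x i) (e i)"
    have "\<And>i. (if i \<in> I then y i else x i) \<in> Xs i"
    proof -
      fix i
      have "y i \<in> Xs i" using y e(2)[of i] by blast
      moreover have "x i \<in> Xs i" using Xs(1) unfolding PiE_def Pi_def by blast
      ultimately show "(if i \<in> I then y i else x i) \<in> Xs i" by simp
    qed
    then have "(\<lambda>i. if i \<in> I then y i else x i) \<in> (\<Pi>\<^sub>E i\<in>UNIV. Xs i)"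
      unfolding PiE_def Pi_def extensional_def by blast
    then show "(\<lambda>i. if i \<in> I then y i else x i) \<in> A" using Xs(3) by blast
  qed
qed

lemma space_gauss: "space std_gauss = UNIV" by (simp add: std_gauss_def)
lemma sets_gauss: "sets std_gauss = sets borel" by (simp add: std_gauss_def)
lemma ball_sets_gauss: "ball x e \<in> sets std_gauss" by (simp add: sets_gauss)

lemma box_pos: assumes I: "finite I" and e: "\<And>i. e i > 0"
  shows "emeasure (PiM I (\<lambda>_. std_gauss)) (PiE I (\<lambda>i. ball (x i) (e i))) > 0"
proof -
  have "emeasure (PiM I (\<lambda>_. std_gauss)) (PiE I (\<lambda>i. ball (x i) (e i))) = (\<Prod>i\<in>I. emeasure std_gauss (ball (x i) (e i)))"
    by (rule product_sigma_finite.emeasure_PiM[OF psf_gauss I]) (rule ball_sets_gauss)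
  moreover have "(\<Prod>i\<in>I. emeasure std_gauss (ball (x i) (e i))) \<noteq> 0"
  proof -
    have "\<And>i. emeasure std_gauss (ball (x i) (e i)) \<noteq> 0" using gauss_ball_pos[OF e] by (simp add: zero_less_iff_neq_zero)
    then show ?thesis by (simp add: ennreal_prod_eq_0)
  qed
  ultimately show ?thesis by (simp add: zero_less_iff_neq_zero)
qed

lemma AE_cont_zero:
  fixes F :: "('i \<Rightarrow> real) \<times> ('j \<Rightarrow> real) \<Rightarrow> real"
  assumes I: "finite I" and J: "finite J" and cont: "continuous_on UNIV F"
    and loc: "\<And>f f' g g'. (\<forall>i\<in>I. f i = f' i) \<Longrightarrow> (\<forall>j\<in>J. g j = g' j) \<Longrightarrow> F (f,g) = F (f',g')"
    and AE: "AE s in (PiM I (\<lambda>_. std_gauss) \<Otimes>\<^sub>M PiM J (\<lambda>_. std_gauss)). F s = 0"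
  shows "F (f0, g0) = 0"
proof (rule ccontr)
  assume ne: "F (f0,g0) \<noteq> 0"
  let ?U = "F -` (- {0})"
  have oU: "open ?U" by (rule open_vimage[OF _ cont]) (rule open_Compl, rule closed_singleton)
  have "(f0,g0) \<in> ?U" using ne by simp
  from open_prod_elim[OF oU this] obtain A B where AB: "open A" "open B" "(f0,g0) \<in> A \<times> B" "A \<times> B \<subseteq> ?U"
    by blast
  from AB(3) have f0A: "f0 \<in> A" and g0B: "g0 \<in> B" by auto
  obtain eX where eX: "\<And>i. eX i > 0" "\<And>y. (\<forall>i. y i \<in> ball (f0 i) (eX i)) \<Longrightarrow> (\<lambda>i. if i \<in> I then y i else f0 i) \<in> A"
    using fun_open_box[OF AB(1) f0A, where I=I] by blast
  obtain eY where eY: "\<And>i. eY i > 0" "\<And>y. (\<forall>i. y i \<in> ball (g0 i) (eY i)) \<Longrightarrow> (\<lambda>i. if i \<in> J then y i else g0 i) \<in> B"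
    using fun_open_box[OF AB(2) g0B, where I=J] by blast
  define BX where "BX = PiE I (\<lambda>i. ball (f0 i) (eX i))"
  define BY where "BY = PiE J (\<lambda>j. ball (g0 j) (eY j))"
  have nz: "F (f,g) \<noteq> 0" if f: "f \<in> BX" and g: "g \<in> BY" for f g
  proof -
    define f' where "f' = (\<lambda>i. if i \<in> I then f i else f0 i)"
    define g' where "g' = (\<lambda>i. if i \<in> J then g i else g0 i)"
    have "\<forall>i. f' i \<in> ball (f0 i) (eX i)"
    proof
      fix i show "f' i \<in> ball (f0 i) (eX i)"
        using f eX(1)[of i] unfolding f'_def BX_def PiE_def Pi_def by auto
    qed
    from eX(2)[OF this] have fA: "f' \<in> A" unfolding f'_def by (simp add: if_distrib cong: if_cong)
    have "\<forall>i. g' i \<in> ball (g0 i) (eY i)"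
    proof
      fix i show "g' i \<in> ball (g0 i) (eY i)"
        using g eY(1)[of i] unfolding g'_def BY_def PiE_def Pi_def by auto
    qed
    from eY(2)[OF this] have gB: "g' \<in> B" unfolding g'_def by (simp add: if_distrib cong: if_cong)
    have "(f', g') \<in> ?U" using AB(4) fA gB by blast
    then have "F (f', g') \<noteq> 0" by simp
    moreover have "F (f,g) = F (f',g')" by (rule loc) (simp_all add: f'_def g'_def)
    ultimately show ?thesis by simp
  qed
  let ?M = "PiM I (\<lambda>_. std_gauss) \<Otimes>\<^sub>M PiM J (\<lambda>_. std_gauss)"
  have sub: "BX \<times> BY \<subseteq> {s \<in> space ?M. \<not> F s = 0}"
  proof
    fix s assume s: "s \<in> BX \<times> BY"
    then have "F s \<noteq> 0" using nz[of "fst s" "snd s"] by (cases s) auto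
    moreover have "s \<in> space ?M"
      using s unfolding space_pair_measure space_PiM space_gauss BX_def BY_def PiE_def Pi_def by auto
    ultimately show "s \<in> {s \<in> space ?M. \<not> F s = 0}" by simp
  qed
  from AE obtain N where N: "{s \<in> space ?M. \<not> F s = 0} \<subseteq> N" "emeasure ?M N = 0" "N \<in> sets ?M"
    by (rule AE_E)
  have "emeasure ?M (BX \<times> BY) \<le> emeasure ?M N" using sub N(1) N(3) by (intro emeasure_mono) auto
  then have z: "emeasure ?M (BX \<times> BY) = 0" using N(2) by simp
  have sX: "BX \<in> sets (PiM I (\<lambda>_. std_gauss))" unfolding BX_def
    by (rule sets_PiM_I_finite[OF I]) (rule ball_sets_gauss)
  have sY: "BY \<in> sets (PiM J (\<lambda>_. std_gauss))" unfolding BY_def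
    by (rule sets_PiM_I_finite[OF J]) (rule ball_sets_gauss)
  have "emeasure ?M (BX \<times> BY) = emeasure (PiM I (\<lambda>_. std_gauss)) BX * emeasure (PiM J (\<lambda>_. std_gauss)) BY"
    by (rule sigma_finite_measure.emeasure_pair_measure_Times[OF prob_space_imp_sigma_finite[OF prob_PG] sX sY])
  moreover have "emeasure (PiM I (\<lambda>_. std_gauss)) BX > 0" unfolding BX_def by (rule box_pos[OF I eX(1)])
  moreover have "emeasure (PiM J (\<lambda>_. std_gauss)) BY > 0" unfolding BY_def by (rule box_pos[OF J eY(1)])
  ultimately have "emeasure ?M (BX \<times> BY) > 0" by (simp add: ennreal_zero_less_mult_iff)
  with z show False by simp
qed

lemma cont_fst_coord: "continuous_on UNIV (\<lambda>s::('a \<Rightarrow> real) \<times> ('b \<Rightarrow> real). fst s i)"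
  by (rule continuous_on_compose2[OF continuous_on_product_coordinates continuous_on_fst[OF continuous_on_id]]) auto

lemma cont_snd_coord: "continuous_on UNIV (\<lambda>s::('a \<Rightarrow> real) \<times> ('b \<Rightarrow> real). snd s i)"
  by (rule continuous_on_compose2[OF continuous_on_product_coordinates continuous_on_snd[OF continuous_on_id]]) auto

lemma cont_yc: "continuous_on UNIV (\<lambda>s. yc d (fst s) (snd s) j)"
  unfolding yc_def by (intro continuous_on_sum continuous_on_mult cont_fst_coord cont_snd_coord)

lemma cont_Pc: "continuous_on UNIV (\<lambda>s. Pc d n (fst s) (snd s) k)"
  unfolding Pc_def by (intro continuous_on_sum continuous_on_mult cont_fst_coord cont_yc)

lemma cont_qc: "continuous_on UNIV (\<lambda>s. qc d W (fst s) (snd s) j)"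
  unfolding qc_def by (intro continuous_on_add continuous_on_sum continuous_on_mult continuous_on_const cont_fst_coord cont_yc)

lemma cont_GGc: "continuous_on UNIV (\<lambda>s. GGc d n V W (fst s) (snd s) r)"
  unfolding GGc_def by (intro continuous_on_add continuous_on_sum continuous_on_mult continuous_on_const cont_fst_coord cont_yc cont_qc)

lemma cont_DD: "continuous_on UNIV (\<lambda>s. DD d n V W (fst s) (snd s) r)"
proof (cases "d < r \<and> r \<le> 2*d")
  case True
  show ?thesis unfolding DD_def if_P[OF True] divide_inverse
    by (intro continuous_on_diff continuous_on_mult continuous_on_const cont_GGc cont_Pc)
next
  case False
  show ?thesis unfolding DD_def if_not_P[OF False] divide_inverse
    by (intro continuous_on_diff continuous_on_mult continuous_on_const cont_GGc)
qed
lemma loc_DD: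
  assumes f: "\<forall>i\<in>{..<d} \<times> {..<n}. f i = f' i" and g: "\<forall>j\<in>{..<d}. g j = g' j"
  shows "DD d n V W f g r = DD d n V W f' g' r"
proof -
  have y: "\<And>j. j < n \<Longrightarrow> yc d f g j = yc d f' g' j"
    unfolding yc_def using f g by (intro sum.cong refl) auto
  have q: "\<And>j. j < n \<Longrightarrow> qc d W f g j = qc d W f' g' j"
    unfolding qc_def using f y by (auto intro!: sum.cong arg_cong2[where f="(+)"])
  have P: "\<And>k. k < d \<Longrightarrow> Pc d n f g k = Pc d n f' g' k"
    unfolding Pc_def using f y by (intro sum.cong refl) auto
  have G: "GGc d n V W f g r = GGc d n V W f' g' r"
    unfolding GGc_def using f y q by (auto intro!: sum.cong arg_cong2[where f="(+)"] arg_cong2[where f="(*)"])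
  show ?thesis unfolding DD_def G
  proof (cases "d < r \<and> r \<le> 2*d")
    case True then have "r - d - 1 < d" by auto
    then show "GGc d n V W f' g' r / real n - (if d < r \<and> r \<le> 2 * d then cc d n * Pc d n f g (r - d - 1) else 0) =
      GGc d n V W f' g' r / real n - (if d < r \<and> r \<le> 2 * d then cc d n * Pc d n f' g' (r - d - 1) else 0)"
      using P by simp
  next
    case False
    show "GGc d n V W f' g' r / real n - (if d < r \<and> r \<le> 2 * d then cc d n * Pc d n f g (r - d - 1) else 0) =
      GGc d n V W f' g' r / real n - (if d < r \<and> r \<le> 2 * d then cc d n * Pc d n f' g' (r - d - 1) else 0)"
      by (simp only: if_not_P[OF False])
  qed
qed

lemma DD_zero_everywhere:
  assumes n1: "n \<ge> 1"
    and V: "Vs \<in> carrier_mat (2*d+2) (2*d+2)" and W: "Ws \<in> carrier_mat (2*d+2) (2*d+2)"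
    and min: "loss_eval d n Vs Ws \<le> loss_eval d n (V0 d n) (W0 d)"
    and r: "r < 2*d+2"
  shows "DD d n Vs Ws f0 g0 r = 0"
proof -
  let ?ES = "integral\<^sup>L (DM d n) (\<lambda>s. \<Sum>r<2*d+2. (es d n (fst s) (snd s) r)^2)"
  let ?F = "\<lambda>s. \<Sum>r<2*d+2. (DD d n Vs Ws (fst s) (snd s) r)^2"
  have z0: "integral\<^sup>L (DM d n) (\<lambda>s. \<Sum>r<2*d+2. (DD d n (V0 d n) (W0 d) (fst s) (snd s) r)^2) = 0"
    using DD_opt[OF n1] by simp
  have L0: "loss_eval d n (V0 d n) (W0 d) = ennreal ((1/2) * ?ES)"
    using loss_split[OF V0_carrier[of d n] W0_carrier[of d], where n=n] z0 by (simp del: sum.lessThan_Suc)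
  have L1: "loss_eval d n Vs Ws = ennreal ((1/2) * (?ES + integral\<^sup>L (DM d n) ?F))"
    using loss_split[OF V W] by (simp del: sum.lessThan_Suc)
  have ES0: "?ES \<ge> 0" by (intro integral_nonneg_AE AE_I2 sum_nonneg) simp
  have DS0: "integral\<^sup>L (DM d n) ?F \<ge> 0" by (intro integral_nonneg_AE AE_I2 sum_nonneg) simp
  from min L0 L1 have "(1/2) * (?ES + integral\<^sup>L (DM d n) ?F) \<le> (1/2) * ?ES"
    using ES0 by (simp add: ennreal_le_iff)
  then have "integral\<^sup>L (DM d n) ?F = 0" using DS0 by simp
  moreover have iF: "integrable (DM d n) ?F"
    by (intro good_integrable good_sum good_power good_DD fm_DM)
  ultimately have AE: "AE s in DM d n. ?F s = 0"
    using integral_nonneg_eq_0_iff_AE[OF iF] by (simp add: sum_nonneg)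
  have cont: "continuous_on UNIV ?F"
    by (intro continuous_on_sum continuous_on_power cont_DD)
  have "?F (f0, g0) = 0"
  proof (rule AE_cont_zero[where I="{..<d} \<times> {..<n}" and J="{..<d}"])
    show "continuous_on UNIV ?F" by (rule cont)
    show "AE s in MX d n \<Otimes>\<^sub>M MW d. ?F s = 0" using AE by (simp only: DM_eq)
    fix f f' :: "nat \<times> nat \<Rightarrow> real" and g g' :: "nat \<Rightarrow> real"
    assume "\<forall>i\<in>{..<d} \<times> {..<n}. f i = f' i" "\<forall>j\<in>{..<d}. g j = g' j"
    then show "?F (f, g) = ?F (f', g')" using loc_DD[of d n f f' g g'] by simp
  qed auto
  then have "\<forall>r\<in>{..<2*d+2}. (DD d n Vs Ws f0 g0 r)^2 = 0"
    by (subst sum_nonneg_eq_0_iff[symmetric]) auto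
  then show ?thesis using r by simp
qed

theorem theorem3p1:
  fixes d n :: nat and Vs Ws :: "real mat"
  assumes "d \<ge> 1" and "n \<ge> 1"
    and "Vs \<in> carrier_mat (de d) (de d)" and "Ws \<in> carrier_mat (de d) (de d)"
    and "\<forall>V \<in> carrier_mat (de d) (de d). \<forall>W \<in> carrier_mat (de d) (de d).
           loss_eval d n Vs Ws \<le> loss_eval d n V W"
  shows "\<forall>X \<in> carrier_mat d n. \<forall>w \<in> carrier_vec d.
           lsa_pred n (Z_in X w (0\<^sub>v d)) Vs Ws =
             vec (de d) (\<lambda>i. if d < i \<and> i \<le> 2 * d
                  then ((real n / real (n + d + 1)) / real n) * (X *\<^sub>v labels X w) $ (i - d - 1)
                  else if i = 2 * d + 1 then 1 else 0)"
proof (intro ballI)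
  fix X :: "real mat" and w :: "real vec"
  assume X: "X \<in> carrier_mat d n" and w: "w \<in> carrier_vec d"
  have V: "Vs \<in> carrier_mat (2*d+2) (2*d+2)" and W: "Ws \<in> carrier_mat (2*d+2) (2*d+2)"
    using assms(3,4) by (simp_all add: de_def)
  have min: "loss_eval d n Vs Ws \<le> loss_eval d n (V0 d n) (W0 d)"
    using assms(5) V0_carrier[of d n] W0_carrier[of d] by (simp add: de_def)
  define f0 where "f0 = (\<lambda>(i,j). X $$ (i,j))"
  define g0 where "g0 = (\<lambda>i. w $ i)"
  have Xe: "X_of d n f0 = X" unfolding X_of_def f0_def using X by (intro eq_matI) auto
  have we: "w_of d g0 = w" unfolding w_of_def g0_def using w by (intro eq_vecI) auto
  have DD0: "\<And>r. r < 2*d+2 \<Longrightarrow> DD d n Vs Ws f0 g0 r = 0"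
    by (rule DD_zero_everywhere[OF assms(2) V W min])
  have P: "\<And>m. m < d \<Longrightarrow> Pc d n f0 g0 m = (X *\<^sub>v labels X w) $ m"
  proof -
    fix m assume m: "m < d"
    have "(X *\<^sub>v labels X w) $ m = (\<Sum>j<n. X $$ (m,j) * labels X w $ j)"
      using X m by (simp add: scalar_prod_def row_def labels_def atLeast0LessThan)
    also have "\<dots> = (\<Sum>j<n. X $$ (m,j) * yc d f0 g0 j)"
    proof (intro sum.cong refl)
      fix j assume j: "j \<in> {..<n}"
      have "labels X w $ j = (\<Sum>i<d. w $ i * X $$ (i,j))"
        using X w j by (simp add: labels_def scalar_prod_def atLeast0LessThan)
      then show "X $$ (m,j) * labels X w $ j = X $$ (m,j) * yc d f0 g0 j"
        by (simp add: yc_def f0_def g0_def)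
    qed
    finally show "Pc d n f0 g0 m = (X *\<^sub>v labels X w) $ m" by (simp add: Pc_def f0_def)
  qed
  have cn: "(real n / real (n + d + 1)) / real n = cc d n"
    using assms(2) by (simp add: cc_def)
  show "lsa_pred n (Z_in X w (0\<^sub>v d)) Vs Ws =
             vec (de d) (\<lambda>i. if d < i \<and> i \<le> 2 * d
                  then ((real n / real (n + d + 1)) / real n) * (X *\<^sub>v labels X w) $ (i - d - 1)
                  else if i = 2 * d + 1 then 1 else 0)"
    unfolding pred_formula[OF X w V W] de_def cn
  proof (intro eq_vecI)
    fix r assume "r < dim_vec (vec (2 * d + 2) (\<lambda>i. if d < i \<and> i \<le> 2 * d
                  then cc d n * (X *\<^sub>v labels X w) $ (i - d - 1) else if i = 2 * d + 1 then 1 else 0))"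
    then have r: "r < 2*d+2" by simp
    have G: "GG X w Vs Ws r / real n = (if d < r \<and> r \<le> 2*d then cc d n * Pc d n f0 g0 (r-d-1) else 0)"
      using DD0[OF r] unfolding DD_def GG_coord[symmetric] Xe we by simp
    show "vec (2 * d + 2) (\<lambda>r. (if r = 2 * d + 1 then 1 else 0) + 1 / real n * GG X w Vs Ws r) $ r =
       vec (2 * d + 2) (\<lambda>i. if d < i \<and> i \<le> 2 * d then cc d n * (X *\<^sub>v labels X w) $ (i - d - 1)
          else if i = 2 * d + 1 then 1 else 0) $ r"
    proof (cases "d < r \<and> r \<le> 2*d")
      case True
      then have "r - d - 1 < d" by auto
      then show ?thesis using r True G P by simp
    next
      case False
      then show ?thesis using r G by (simp add: if_not_P[OF False])
    qed
  qed simp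
qed

end
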